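(* Let $t=f\,p_1\cdots p_n$ be a linear term, with $f$ a function symbol and $p_1,\dots,p_n$ patterns, whose variables are $x_1,\dots,x_m$, and let $\sigma=\{x_1:=s_1,\dots,x_m:=s_m\}$ be a substitution. If $\emptyset\vdash^{\le}_J t\sigma:\rho$, then there exist a context $\Gamma=x_1:\sigma_1,\dots,x_m:\sigma_m$ and a monotype $\tau$ with $\Gamma\vdash_{FP}t:\tau$, together with an index substitution $\theta$ such that $\tau\theta\sqsubseteq_J\rho$ and $\emptyset\vdash^{\le}_J s_k:\rho_k\theta$ for each $1\le k\le m$, where $\sigma_k=\forall\vec i.\rho_k$.
   Context: Simply typed terms over variables, function symbols $\mathcal F$, constructors $\mathcal C$: variables, symbols, applications $t\,u$, pairs $(t,u)$, and $\mathsf{let}\ (x,y)=t\ \mathsf{in}\ u$. Patterns: $p::=x\mid c\,p_1\cdots p_{\mathrm{ar}(c)}$ with $c$ a constructor of result base type, fully applied. A term is linear if each variable occurs at most once. Index terms $a::=i\mid g(a_1,\dots,a_k)$ over index symbols $g$ (including $0,\mathsf s,+$). An interpretation $J$ maps each $k$-ary $g$ to a total weakly monotone function $\mathbb N^k\to\mathbb N$ ($0,\mathsf s,+$ standard); $a\le_J b$ iff $[a]^\alpha_J\le[b]^\alpha_J$ for all assignments $\alpha$. Sized types: monotypes $\rho::=B^a\mid\rho_1\times\rho_2\mid\sigma\to\rho$; polytypes $\forall\vec i.\,\sigma\to\rho$; types $\sigma::=\rho\mid$ polytype; a monotype is identified with $\forall\cdot.\rho$; types up to $\alpha$-equivalence.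 $\mathrm{FPV}(B^a)=\mathrm{Var}(a)$, $\mathrm{FNV}(B^a)=\emptyset$; products: unions; $\mathrm{FPV}(\sigma\to\rho)=\mathrm{FNV}(\sigma)\cup\mathrm{FPV}(\rho)$, $\mathrm{FNV}(\sigma\to\rho)=\mathrm{FPV}(\sigma)\cup\mathrm{FNV}(\rho)$; quantifiers remove bound variables; $\mathrm{FV}=\mathrm{FPV}\cup\mathrm{FNV}$. Instantiation: $\forall\vec i.\tau\sqsupseteq\rho$ iff $\rho=\tau\{\vec i:=\vec a\}$. Subtyping $\sqsubseteq_J$: $B^a\sqsubseteq_J B^b$ if $a\le_J b$; componentwise on products; $\sigma_1\to\rho_1\sqsubseteq_J\sigma_2\to\rho_2$ if $\sigma_2\sqsubseteq_J\sigma_1$, $\rho_1\sqsubseteq_J\rho_2$; $\forall\vec i.\rho_1\sqsubseteq_J\sigma_2$ if $\sigma_2\sqsupseteq\rho_2$, $\rho_1\sqsubseteq_J\rho_2$, $\vec i\cap\mathrm{FV}(\sigma_2)=\emptyset$. Canonicity: a monotype is canonical if it is $B^a$; a product of canonical monotypes; $B^i\to\rho'$ with $i$ an index variable, $\rho'$ canonical and $i\notin\mathrm{FNV}(\rho')$; or $\pi\to\rho'$ with $\pi$ a canonical polytype, $\rho'$ canonical and $\mathrm{FV}(\pi)\cap\mathrm{FNV}(\rho')=\emptyset$. A polytype $\forall\vec i.\rho$ is canonical if $\rho$ is canonical and $\mathrm{FNV}(\rho)\subseteq\{\vec i\}$. Every $s\in\mathcal F\cup\mathcal C$ has a declared closed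 canonical sized type $s::\sigma$ whose skeleton is the simple type of $s$. Typing $\Gamma\vdash^{\le}_J t:\rho$ ($\Gamma$ maps variables to sized types; $\Gamma|_X$ restriction): (Var) $\Gamma,x:\sigma\vdash x:\rho$ if $\sigma\sqsupseteq\rho$; (Fun) $\Gamma\vdash s:\rho$ if $s::\sigma$, $\sigma\sqsupseteq\rho$; (Let) from $\Gamma\vdash t:\rho_1\times\rho_2$, $\Gamma,x_1:\rho_1,x_2:\rho_2\vdash u:\rho$ infer $\Gamma\vdash\mathsf{let}\ (x_1,x_2)=t\ \mathsf{in}\ u:\rho$; (Pair) componentwise; (App) from $\Gamma\vdash t:(\forall\vec i.\tau_1)\to\rho$, $\Gamma\vdash u:\tau_2$, $\tau_2\sqsubseteq_J\tau_1$, $\vec i\cap\mathrm{FV}(\Gamma|_{\mathrm{FV}(u)})=\emptyset$ infer $\Gamma\vdash t\,u:\rho$; (SubType) from $\Gamma\vdash t:\tau$, $\tau\sqsubseteq_J\rho$ infer $\Gamma\vdash t:\rho$. Footprint relation $\Gamma\vdash_{FP}t:\rho$: (FpFun) if $f::\forall\vec i.\rho$ then $\emptyset\vdash_{FP}f:\rho$; (FpAppVar) if $\Gamma\vdash_{FP}s:\sigma\to\rho$ and $x$ a variable then $\Gamma\uplus\{x:\sigma\}\vdash_{FP}s\,x:\rho$; (FpAppNVar) if $\Gamma_1\vdash_{FP}s:B^i\to\rho$, $\Gamma_2\vdash_{FP}u:B^a$, $u$ not a variable, and $(\mathrm{FV}(\Gamma_1)\cup\mathrm{FV}(\rho))\cap(\mathrm{FV}(\Gamma_2)\cup\mathrm{Var}(a))=\emptyset$,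 then $\Gamma_1\uplus\Gamma_2\vdash_{FP}s\,u:\rho\{i:=a\}$. *)

theory Defs
  imports Main
begin

datatype 'b stype = SBase 'b | SProd "'b stype" "'b stype" | SArr "'b stype" "'b stype"

fun s_arity :: "'b stype \<Rightarrow> nat" where
  "s_arity (SArr _ \<tau>) = Suc (s_arity \<tau>)"
| "s_arity _ = 0"

fun s_result :: "'b stype \<Rightarrow> 'b stype" where
  "s_result (SArr _ \<tau>) = s_result \<tau>"
| "s_result \<tau> = \<tau>"

datatype ('f, 'c) symb = Fn 'f | Cn 'c

datatype ('v, 'f, 'c) trm =
    Var 'v
  | Sym "('f, 'c) symb"
  | App "('v, 'f, 'c) trm" "('v, 'f, 'c) trm"
  | Pair "('v, 'f, 'c) trm" "('v, 'f, 'c) trm"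
  | Let 'v 'v "('v, 'f, 'c) trm" "('v, 'f, 'c) trm"   \<comment> \<open>let (x,y) = t in u\<close>

definition apps :: "('v, 'f, 'c) trm \<Rightarrow> ('v, 'f, 'c) trm list \<Rightarrow> ('v, 'f, 'c) trm" where
  "apps h ts = foldl App h ts"

fun is_var :: "('v, 'f, 'c) trm \<Rightarrow> bool" where
  "is_var (Var _) = True"
| "is_var _ = False"

fun tfv :: "('v, 'f, 'c) trm \<Rightarrow> 'v set" where
  "tfv (Var x) = {x}"
| "tfv (Sym _) = {}"
| "tfv (App t u) = tfv t \<union> tfv u"
| "tfv (Pair t u) = tfv t \<union> tfv u"
| "tfv (Let x y t u) = tfv t \<union> (tfv u - {x, y})"

fun var_occs :: "('v, 'f, 'c) trm \<Rightarrow> 'v list" where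
  "var_occs (Var x) = [x]"
| "var_occs (Sym _) = []"
| "var_occs (App t u) = var_occs t @ var_occs u"
| "var_occs (Pair t u) = var_occs t @ var_occs u"
| "var_occs (Let x y t u) = var_occs t @ var_occs u"

definition linear :: "('v, 'f, 'c) trm \<Rightarrow> bool" where
  "linear t \<longleftrightarrow> distinct (var_occs t)"

text \<open>Term substitution (only applied to let-free terms below).\<close>
fun tsubst :: "('v \<Rightarrow> ('v, 'f, 'c) trm) \<Rightarrow> ('v, 'f, 'c) trm \<Rightarrow> ('v, 'f, 'c) trm" where
  "tsubst \<sigma> (Var x) = \<sigma> x"
| "tsubst \<sigma> (Sym s) = Sym s"
| "tsubst \<sigma> (App t u) = App (tsubst \<sigma> t) (tsubst \<sigma> u)"
| "tsubst \<sigma> (Pair t u) = Pair (tsubst \<sigma> t) (tsubst \<sigma> u)"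
| "tsubst \<sigma> (Let x y t u) = Let x y (tsubst \<sigma> t) (tsubst (\<sigma>(x := Var x, y := Var y)) u)"

inductive is_pat :: "(('f, 'c) symb \<Rightarrow> 'b stype) \<Rightarrow> ('v, 'f, 'c) trm \<Rightarrow> bool"
  for styp where
  pat_var: "is_pat styp (Var x)"
| pat_con: "\<lbrakk> s_result (styp (Cn c)) = SBase B;
             length ps = s_arity (styp (Cn c));
             \<forall>p\<in>set ps. is_pat styp p \<rbrakk>
           \<Longrightarrow> is_pat styp (apps (Sym (Cn c)) ps)"

text \<open>Free index variables are named by naturals (IFree); variables bound by a
  sized-type quantifier are represented locally nameless: IBnd d j is the j-th variable
  of the d-th enclosing quantifier.\<close>
datatype 'g ix =
    IFree nat
  | IBnd nat nat
  | IZero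
  | ISuc "'g ix"
  | IPlus "'g ix" "'g ix"
  | IFn 'g "'g ix list"

primrec ieval :: "('g \<Rightarrow> nat list \<Rightarrow> nat) \<Rightarrow> (nat \<Rightarrow> nat) \<Rightarrow> 'g ix \<Rightarrow> nat" where
  "ieval J \<alpha> (IFree i) = \<alpha> i"
| "ieval J \<alpha> (IBnd d j) = 0"
| "ieval J \<alpha> IZero = 0"
| "ieval J \<alpha> (ISuc a) = Suc (ieval J \<alpha> a)"
| "ieval J \<alpha> (IPlus a b) = ieval J \<alpha> a + ieval J \<alpha> b"
| "ieval J \<alpha> (IFn g as) = J g (map (ieval J \<alpha>) as)"

definition weakly_monotone_interp :: "('g \<Rightarrow> nat list \<Rightarrow> nat) \<Rightarrow> bool" where
  "weakly_monotone_interp J \<longleftrightarrow>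
     (\<forall>g xs ys. list_all2 (\<le>) xs ys \<longrightarrow> J g xs \<le> J g ys)"

definition ix_le :: "('g \<Rightarrow> nat list \<Rightarrow> nat) \<Rightarrow> 'g ix \<Rightarrow> 'g ix \<Rightarrow> bool" where
  "ix_le J a b \<longleftrightarrow> (\<forall>\<alpha>. ieval J \<alpha> a \<le> ieval J \<alpha> b)"

primrec ifv :: "'g ix \<Rightarrow> nat set" where
  "ifv (IFree i) = {i}"
| "ifv (IBnd d j) = {}"
| "ifv IZero = {}"
| "ifv (ISuc a) = ifv a"
| "ifv (IPlus a b) = ifv a \<union> ifv b"
| "ifv (IFn g as) = \<Union> (set (map ifv as))"

primrec iopen :: "nat \<Rightarrow> 'g ix list \<Rightarrow> 'g ix \<Rightarrow> 'g ix" where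
  "iopen k as (IFree i) = IFree i"
| "iopen k as (IBnd d j) = (if d = k \<and> j < length as then as ! j else IBnd d j)"
| "iopen k as IZero = IZero"
| "iopen k as (ISuc a) = ISuc (iopen k as a)"
| "iopen k as (IPlus a b) = IPlus (iopen k as a) (iopen k as b)"
| "iopen k as (IFn g bs) = IFn g (map (iopen k as) bs)"

primrec isub :: "(nat \<Rightarrow> 'g ix) \<Rightarrow> 'g ix \<Rightarrow> 'g ix" where
  "isub \<theta> (IFree i) = \<theta> i"
| "isub \<theta> (IBnd d j) = IBnd d j"
| "isub \<theta> IZero = IZero"
| "isub \<theta> (ISuc a) = ISuc (isub \<theta> a)"
| "isub \<theta> (IPlus a b) = IPlus (isub \<theta> a) (isub \<theta> b)"
| "isub \<theta> (IFn g bs) = IFn g (map (isub \<theta>) bs)"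

text \<open>Local closedness w.r.t. a stack of quantifier sizes (innermost first).\<close>
primrec ilc :: "nat list \<Rightarrow> 'g ix \<Rightarrow> bool" where
  "ilc ks (IFree i) = True"
| "ilc ks (IBnd d j) = (d < length ks \<and> j < ks ! d)"
| "ilc ks IZero = True"
| "ilc ks (ISuc a) = ilc ks a"
| "ilc ks (IPlus a b) = (ilc ks a \<and> ilc ks b)"
| "ilc ks (IFn g bs) = list_all (ilc ks) bs"

text \<open>mty = monotypes, sty = types (Forall n rho binds n index variables; Forall 0 rho
  is the monotype rho).\<close>
datatype ('b, 'g) mty =
    Base 'b "'g ix"
  | Prod "('b, 'g) mty" "('b, 'g) mty"
  | Arr "('b, 'g) sty" "('b, 'g) mty"
and ('b, 'g) sty = Forall nat "('b, 'g) mty"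

abbreviation Mono :: "('b, 'g) mty \<Rightarrow> ('b, 'g) sty" where
  "Mono \<rho> \<equiv> Forall 0 \<rho>"

fun is_arr :: "('b, 'g) mty \<Rightarrow> bool" where
  "is_arr (Arr _ _) = True"
| "is_arr _ = False"

fun fpv_m :: "('b, 'g) mty \<Rightarrow> nat set"
  and fnv_m :: "('b, 'g) mty \<Rightarrow> nat set"
  and fpv_s :: "('b, 'g) sty \<Rightarrow> nat set"
  and fnv_s :: "('b, 'g) sty \<Rightarrow> nat set" where
  "fpv_m (Base B a) = ifv a"
| "fpv_m (Prod r1 r2) = fpv_m r1 \<union> fpv_m r2"
| "fpv_m (Arr s r) = fnv_s s \<union> fpv_m r"
| "fnv_m (Base B a) = {}"
| "fnv_m (Prod r1 r2) = fnv_m r1 \<union> fnv_m r2"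
| "fnv_m (Arr s r) = fpv_s s \<union> fnv_m r"
| "fpv_s (Forall n r) = fpv_m r"
| "fnv_s (Forall n r) = fnv_m r"

definition fv_m :: "('b, 'g) mty \<Rightarrow> nat set" where
  "fv_m r = fpv_m r \<union> fnv_m r"

definition fv_s :: "('b, 'g) sty \<Rightarrow> nat set" where
  "fv_s s = fpv_s s \<union> fnv_s s"

primrec open_m :: "nat \<Rightarrow> 'g ix list \<Rightarrow> ('b, 'g) mty \<Rightarrow> ('b, 'g) mty"
  and open_s :: "nat \<Rightarrow> 'g ix list \<Rightarrow> ('b, 'g) sty \<Rightarrow> ('b, 'g) sty" where
  "open_m k as (Base B a) = Base B (iopen k as a)"
| "open_m k as (Prod r1 r2) = Prod (open_m k as r1) (open_m k as r2)"
| "open_m k as (Arr s r) = Arr (open_s k as s) (open_m k as r)"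
| "open_s k as (Forall n r) = Forall n (open_m (Suc k) as r)"

primrec isub_m :: "(nat \<Rightarrow> 'g ix) \<Rightarrow> ('b, 'g) mty \<Rightarrow> ('b, 'g) mty"
  and isub_s :: "(nat \<Rightarrow> 'g ix) \<Rightarrow> ('b, 'g) sty \<Rightarrow> ('b, 'g) sty" where
  "isub_m \<theta> (Base B a) = Base B (isub \<theta> a)"
| "isub_m \<theta> (Prod r1 r2) = Prod (isub_m \<theta> r1) (isub_m \<theta> r2)"
| "isub_m \<theta> (Arr s r) = Arr (isub_s \<theta> s) (isub_m \<theta> r)"
| "isub_s \<theta> (Forall n r) = Forall n (isub_m \<theta> r)"

primrec lc_m :: "nat list \<Rightarrow> ('b, 'g) mty \<Rightarrow> bool"
  and lc_s :: "nat list \<Rightarrow> ('b, 'g) sty \<Rightarrow> bool" where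
  "lc_m ks (Base B a) = ilc ks a"
| "lc_m ks (Prod r1 r2) = (lc_m ks r1 \<and> lc_m ks r2)"
| "lc_m ks (Arr s r) = (lc_s ks s \<and> lc_m ks r)"
| "lc_s ks (Forall n r) = lc_m (n # ks) r"

primrec wf_m :: "('b, 'g) mty \<Rightarrow> bool"
  and wf_s :: "('b, 'g) sty \<Rightarrow> bool" where
  "wf_m (Base B a) = True"
| "wf_m (Prod r1 r2) = (wf_m r1 \<and> wf_m r2)"
| "wf_m (Arr s r) = (wf_s s \<and> wf_m r)"
| "wf_s (Forall n r) = ((0 < n \<longrightarrow> is_arr r) \<and> wf_m r)"

primrec skel_m :: "('b, 'g) mty \<Rightarrow> 'b stype"
  and skel_s :: "('b, 'g) sty \<Rightarrow> 'b stype" where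
  "skel_m (Base B a) = SBase B"
| "skel_m (Prod r1 r2) = SProd (skel_m r1) (skel_m r2)"
| "skel_m (Arr s r) = SArr (skel_s s) (skel_m r)"
| "skel_s (Forall n r) = skel_m r"

definition closed_s :: "('b, 'g) sty \<Rightarrow> bool" where
  "closed_s s \<longleftrightarrow> lc_s [] s \<and> fv_s s = {}"

definition fresh_names :: "nat \<Rightarrow> nat set \<Rightarrow> nat list \<Rightarrow> bool" where
  "fresh_names n S is \<longleftrightarrow> length is = n \<and> distinct is \<and> set is \<inter> S = {}"

abbreviation open_names :: "nat list \<Rightarrow> ('b, 'g) mty \<Rightarrow> ('b, 'g) mty" where
  "open_names is r \<equiv> open_m 0 (map IFree is) r"

definition inst :: "('b, 'g) sty \<Rightarrow> ('b, 'g) mty \<Rightarrow> bool" where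
  "inst s r \<longleftrightarrow> (case s of Forall n t \<Rightarrow>
      \<exists>as. length as = n \<and> (\<forall>a\<in>set as. ilc [] a) \<and> r = open_m 0 as t)"

inductive subm :: "('g \<Rightarrow> nat list \<Rightarrow> nat) \<Rightarrow> ('b, 'g) mty \<Rightarrow> ('b, 'g) mty \<Rightarrow> bool"
  and subs :: "('g \<Rightarrow> nat list \<Rightarrow> nat) \<Rightarrow> ('b, 'g) sty \<Rightarrow> ('b, 'g) sty \<Rightarrow> bool"
  for J where
  sub_base: "ix_le J a b \<Longrightarrow> subm J (Base B a) (Base B b)"
| sub_prod: "\<lbrakk> subm J r1 r2; subm J r1' r2' \<rbrakk> \<Longrightarrow> subm J (Prod r1 r1') (Prod r2 r2')"
| sub_arr: "\<lbrakk> subs J s2 s1; subm J r1 r2 \<rbrakk> \<Longrightarrow> subm J (Arr s1 r1) (Arr s2 r2)"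
| sub_all: "\<lbrakk> fresh_names n (fv_s (Forall n r1) \<union> fv_s s2) is; inst s2 r2;
             subm J (open_names is r1) r2 \<rbrakk> \<Longrightarrow> subs J (Forall n r1) s2"

type_synonym ('v, 'b, 'g) ctx = "'v \<rightharpoonup> ('b, 'g) sty"

definition ctx_fv :: "('v, 'b, 'g) ctx \<Rightarrow> nat set" where
  "ctx_fv \<Gamma> = \<Union> (fv_s ` ran \<Gamma>)"

inductive sized_typ :: "(('f, 'c) symb \<Rightarrow> ('b, 'g) sty) \<Rightarrow> ('g \<Rightarrow> nat list \<Rightarrow> nat)
    \<Rightarrow> ('v, 'b, 'g) ctx \<Rightarrow> ('v, 'f, 'c) trm \<Rightarrow> ('b, 'g) mty \<Rightarrow> bool"
  for decl J where
  T_Var: "\<lbrakk> \<Gamma> x = Some s; inst s r \<rbrakk> \<Longrightarrow> sized_typ decl J \<Gamma> (Var x) r"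
| T_Fun: "inst (decl f) r \<Longrightarrow> sized_typ decl J \<Gamma> (Sym f) r"
| T_Let: "\<lbrakk> sized_typ decl J \<Gamma> t (Prod r1 r2);
            sized_typ decl J (\<Gamma>(x1 \<mapsto> Mono r1, x2 \<mapsto> Mono r2)) u r \<rbrakk>
          \<Longrightarrow> sized_typ decl J \<Gamma> (Let x1 x2 t u) r"
| T_Pair: "\<lbrakk> sized_typ decl J \<Gamma> t r1; sized_typ decl J \<Gamma> u r2 \<rbrakk>
          \<Longrightarrow> sized_typ decl J \<Gamma> (Pair t u) (Prod r1 r2)"
| T_App: "\<lbrakk> sized_typ decl J \<Gamma> t (Arr (Forall n t1) r); sized_typ decl J \<Gamma> u t2;
            fresh_names n (fv_s (Forall n t1) \<union> ctx_fv (\<Gamma> |` tfv u)) is;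
            subm J t2 (open_names is t1) \<rbrakk>
          \<Longrightarrow> sized_typ decl J \<Gamma> (App t u) r"
| T_Sub: "\<lbrakk> sized_typ decl J \<Gamma> t r1; subm J r1 r \<rbrakk> \<Longrightarrow> sized_typ decl J \<Gamma> t r"

inductive fp :: "(('f, 'c) symb \<Rightarrow> ('b, 'g) sty)
    \<Rightarrow> ('v, 'b, 'g) ctx \<Rightarrow> ('v, 'f, 'c) trm \<Rightarrow> ('b, 'g) mty \<Rightarrow> bool"
  for decl where
  Fp_Fun: "\<lbrakk> decl f = Forall n r; fresh_names n (fv_s (decl f)) is \<rbrakk>
           \<Longrightarrow> fp decl Map.empty (Sym f) (open_names is r)"
| Fp_AppVar: "\<lbrakk> fp decl \<Gamma> s (Arr \<sigma> r); x \<notin> dom \<Gamma> \<rbrakk>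
           \<Longrightarrow> fp decl (\<Gamma>(x \<mapsto> \<sigma>)) (App s (Var x)) r"
| Fp_AppNVar: "\<lbrakk> fp decl \<Gamma>1 s (Arr (Mono (Base B (IFree i))) r);
                 fp decl \<Gamma>2 u (Base B a); \<not> is_var u;
                 dom \<Gamma>1 \<inter> dom \<Gamma>2 = {};
                 (ctx_fv \<Gamma>1 \<union> fv_m r) \<inter> (ctx_fv \<Gamma>2 \<union> ifv a) = {} \<rbrakk>
           \<Longrightarrow> fp decl (\<Gamma>1 ++ \<Gamma>2) (App s u) (isub_m (IFree(i := a)) r)"

inductive canon_m :: "('b, 'g) mty \<Rightarrow> bool"
  and canon_s :: "('b, 'g) sty \<Rightarrow> bool" where
  can_base: "canon_m (Base B a)"
| can_prod: "\<lbrakk> canon_m r1; canon_m r2 \<rbrakk> \<Longrightarrow> canon_m (Prod r1 r2)"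
| can_arr_var: "\<lbrakk> canon_m r; i \<notin> fnv_m r \<rbrakk> \<Longrightarrow> canon_m (Arr (Mono (Base B (IFree i))) r)"
| can_arr_poly: "\<lbrakk> canon_s (Forall n p); is_arr p; canon_m r;
                   fv_s (Forall n p) \<inter> fnv_m r = {} \<rbrakk>
                 \<Longrightarrow> canon_m (Arr (Forall n p) r)"
| can_poly: "\<lbrakk> fresh_names n (fv_s (Forall n r)) is; canon_m (open_names is r);
               fnv_m (open_names is r) \<subseteq> set is \<rbrakk> \<Longrightarrow> canon_s (Forall n r)"

end

theory Submission
  imports Defs
begin


section \<open>Index terms\<close>

lemma ieval_isub: "ieval J \<alpha> (isub \<theta> a) = ieval J (\<lambda>j. ieval J \<alpha> (\<theta> j)) a"
  by (induction a) (simp_all add: comp_def cong: map_cong)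

lemma ieval_mono:
  assumes "weakly_monotone_interp J"
  shows "(\<forall>j\<in>ifv a. \<alpha> j \<le> \<beta> j) \<Longrightarrow> ieval J \<alpha> a \<le> ieval J \<beta> a"
proof (induction a)
  case (IFn g as)
  have "list_all2 (\<le>) (map (ieval J \<alpha>) as) (map (ieval J \<beta>) as)"
    using IFn by (auto simp: list_all2_conv_all_nth)
  then show ?case using assms unfolding weakly_monotone_interp_def by simp
qed auto

lemma iopen_lc: "ilc [] a \<Longrightarrow> iopen k as a = a"
  by (induction a) (auto simp: list_all_iff intro: map_idI)

lemma ilc_nil_any: "ilc [] a \<Longrightarrow> ilc ks a"
  by (induction a) (auto simp: list_all_iff)

lemma isub_iopen: "(\<forall>j. ilc [] (\<theta> j)) \<Longrightarrow>
   isub \<theta> (iopen k as a) = iopen k (map (isub \<theta>) as) (isub \<theta> a)"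
  by (induction a) (auto simp: iopen_lc)

lemma isub_cong: "(\<forall>j\<in>ifv a. \<theta> j = \<theta>' j) \<Longrightarrow> isub \<theta> a = isub \<theta>' a"
  by (induction a) auto

lemma isub_id: "isub IFree a = a"
  by (induction a) (auto intro: map_idI)

lemma isub_comp: "isub \<theta> (isub \<theta>' a) = isub (isub \<theta> \<circ> \<theta>') a"
  by (induction a) auto

lemma ifv_isub: "ifv (isub \<theta> a) = (\<Union>j\<in>ifv a. ifv (\<theta> j))"
  by (induction a) auto

lemma ifv_iopen: "ifv (iopen k as a) \<subseteq> ifv a \<union> \<Union>(ifv ` set as)"
  by (induction a) (auto dest: nth_mem)

lemma ifv_iopen2: "ifv a \<subseteq> ifv (iopen k as a)"
  by (induction a) auto

lemma ilc_isub: "(\<forall>j. ilc [] (\<theta> j)) \<Longrightarrow> ilc ks (isub \<theta> a) = ilc ks a"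
  by (induction a) (auto simp: list_all_iff ilc_nil_any)

lemma ilc_iopen: "ilc (ks @ [n]) a \<Longrightarrow> length ks = k \<Longrightarrow> length as = n \<Longrightarrow>
   \<forall>b\<in>set as. ilc [] b \<Longrightarrow> ilc ks (iopen k as a)"
  apply (induction a)
       apply (auto simp: list_all_iff nth_append ilc_nil_any less_Suc_eq split: if_splits)
  done

lemma finite_ifv: "finite (ifv a)"
  by (induction a) auto

lemma ix_le_refl: "ix_le J a a" by (simp add: ix_le_def)
lemma ix_le_trans: "ix_le J a b \<Longrightarrow> ix_le J b c \<Longrightarrow> ix_le J a c"
  unfolding ix_le_def by (meson order_trans)

lemma ix_le_isub: "ix_le J a b \<Longrightarrow> ix_le J (isub \<theta> a) (isub \<theta> b)"
  unfolding ix_le_def by (simp add: ieval_isub)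

lemma ix_le_isub_mono: "weakly_monotone_interp J \<Longrightarrow> (\<forall>j\<in>ifv a. ix_le J (\<theta> j) (\<theta>' j)) \<Longrightarrow>
   ix_le J (isub \<theta> a) (isub \<theta>' a)"
  unfolding ix_le_def by (auto simp: ieval_isub intro!: ieval_mono)




lemma fv_simps[simp]:
  "fv_m (Base B a) = ifv a"
  "fv_m (mty.Prod r1 r2) = fv_m r1 \<union> fv_m r2"
  "fv_m (Arr s r) = fv_s s \<union> fv_m r"
  "fv_s (Forall n r) = fv_m r"
  by (auto simp: fv_m_def fv_s_def)

primrec msz_m :: "('b, 'g) mty \<Rightarrow> nat" and msz_s :: "('b, 'g) sty \<Rightarrow> nat" where
  "msz_m (Base B a) = 1"
| "msz_m (mty.Prod a b) = Suc (msz_m a + msz_m b)"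
| "msz_m (Arr s r) = Suc (msz_s s + msz_m r)"
| "msz_s (Forall n r) = msz_m r"

definition lcs :: "(nat \<Rightarrow> 'g ix) \<Rightarrow> bool" where
  "lcs \<theta> \<longleftrightarrow> (\<forall>j. ilc [] (\<theta> j))"

lemma lcs_IFree[simp]: "lcs IFree" by (simp add: lcs_def)

lemma isub_open: fixes r :: "('b,'g) mty" and s :: "('b,'g) sty" shows
  "lcs \<theta> \<Longrightarrow> isub_m \<theta> (open_m k as r) = open_m k (map (isub \<theta>) as) (isub_m \<theta> r)"
  "lcs \<theta> \<Longrightarrow> isub_s \<theta> (open_s k as s) = open_s k (map (isub \<theta>) as) (isub_s \<theta> s)"
  by (induction r and s arbitrary: k and k rule: mty.induct sty.induct) (auto simp: isub_iopen lcs_def)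

lemma isub_cong_ms: fixes r :: "('b,'g) mty" and s :: "('b,'g) sty" shows
  "(\<forall>j\<in>fv_m r. \<theta> j = \<theta>' j) \<Longrightarrow> isub_m \<theta> r = isub_m \<theta>' r"
  "(\<forall>j\<in>fv_s s. \<theta> j = \<theta>' j) \<Longrightarrow> isub_s \<theta> s = isub_s \<theta>' s"
  by (induction r and s rule: mty.induct sty.induct) (auto intro: isub_cong)

lemma isub_id_ms[simp]: fixes r :: "('b,'g) mty" and s :: "('b,'g) sty" shows
  "isub_m IFree r = r" "isub_s IFree s = s"
  by (induction r and s rule: mty.induct sty.induct) (auto simp: isub_id)

lemma isub_comp_ms: fixes r :: "('b,'g) mty" and s :: "('b,'g) sty" shows
  "isub_m \<theta> (isub_m \<theta>' r) = isub_m (isub \<theta> \<circ> \<theta>') r"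
  "isub_s \<theta> (isub_s \<theta>' s) = isub_s (isub \<theta> \<circ> \<theta>') s"
  by (induction r and s rule: mty.induct sty.induct) (auto simp: isub_comp comp_def)

lemma pnv_isub: fixes r :: "('b,'g) mty" and s :: "('b,'g) sty" shows
  "fpv_m (isub_m \<theta> r) = (\<Union>j\<in>fpv_m r. ifv (\<theta> j)) \<and> fnv_m (isub_m \<theta> r) = (\<Union>j\<in>fnv_m r. ifv (\<theta> j))"
  "fpv_s (isub_s \<theta> s) = (\<Union>j\<in>fpv_s s. ifv (\<theta> j)) \<and> fnv_s (isub_s \<theta> s) = (\<Union>j\<in>fnv_s s. ifv (\<theta> j))"
  by (induction r and s rule: mty.induct sty.induct) (simp_all add: ifv_isub)

lemma fv_isub: "fv_m (isub_m \<theta> r) = (\<Union>j\<in>fv_m r. ifv (\<theta> j))"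
  "fv_s (isub_s \<theta> s) = (\<Union>j\<in>fv_s s. ifv (\<theta> j))"
  using pnv_isub(1)[of \<theta> r] pnv_isub(2)[of \<theta> s] by (simp_all add: fv_m_def fv_s_def UN_Un)

lemma pnv_open: fixes r :: "('b,'g) mty" and s :: "('b,'g) sty" shows
  "fpv_m (open_m k as r) \<subseteq> fpv_m r \<union> \<Union>(ifv ` set as) \<and> fnv_m (open_m k as r) \<subseteq> fnv_m r \<union> \<Union>(ifv ` set as)"
  "fpv_s (open_s k as s) \<subseteq> fpv_s s \<union> \<Union>(ifv ` set as) \<and> fnv_s (open_s k as s) \<subseteq> fnv_s s \<union> \<Union>(ifv ` set as)"
proof (induction r and s arbitrary: k and k rule: mty.induct sty.induct)
  case (Base x1 x2) then show ?case using ifv_iopen by auto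
next
  case (Prod x1 x2) show ?case using Prod.IH(1)[of k] Prod.IH(2)[of k] by auto
next
  case (Arr x1 x2) show ?case using Arr.IH(1)[of k] Arr.IH(2)[of k] by auto
next
  case (Forall x1 x2) show ?case using Forall.IH[of "Suc k"] by auto
qed
lemma pnv_open2: fixes r :: "('b,'g) mty" and s :: "('b,'g) sty" shows
  "fpv_m r \<subseteq> fpv_m (open_m k as r) \<and> fnv_m r \<subseteq> fnv_m (open_m k as r)"
  "fpv_s s \<subseteq> fpv_s (open_s k as s) \<and> fnv_s s \<subseteq> fnv_s (open_s k as s)"
proof (induction r and s arbitrary: k and k rule: mty.induct sty.induct)
  case (Base x1 x2) then show ?case using ifv_iopen2 by auto
next
  case (Prod x1 x2) show ?case using Prod.IH(1)[of k] Prod.IH(2)[of k] by auto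
next
  case (Arr x1 x2) show ?case using Arr.IH(1)[of k] Arr.IH(2)[of k] by auto
next
  case (Forall x1 x2) show ?case using Forall.IH[of "Suc k"] by auto
qed

lemma fv_open: "fv_m (open_m k as r) \<subseteq> fv_m r \<union> \<Union>(ifv ` set as)"
  using pnv_open(1)[of k as r] by (auto simp: fv_m_def)

lemma fv_open2: "fv_m r \<subseteq> fv_m (open_m k as r)"
  using pnv_open2(1)[of r k as] by (auto simp: fv_m_def)

lemma lc_isub: fixes r :: "('b,'g) mty" and s :: "('b,'g) sty" shows
  "lcs \<theta> \<Longrightarrow> lc_m ks (isub_m \<theta> r) = lc_m ks r"
  "lcs \<theta> \<Longrightarrow> lc_s ks (isub_s \<theta> s) = lc_s ks s"
  by (induction r and s arbitrary: ks and ks rule: mty.induct sty.induct) (auto simp: ilc_isub lcs_def)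

lemma lc_open: fixes r :: "('b,'g) mty" and s :: "('b,'g) sty" shows
  "lc_m (ks @ [n]) r \<Longrightarrow> length ks = k \<Longrightarrow> length as = n \<Longrightarrow>
   \<forall>b\<in>set as. ilc [] b \<Longrightarrow> lc_m ks (open_m k as r)"
  "lc_s (ks @ [n]) s \<Longrightarrow> length ks = k \<Longrightarrow> length as = n \<Longrightarrow>
   \<forall>b\<in>set as. ilc [] b \<Longrightarrow> lc_s ks (open_s k as s)"
proof (induction r and s arbitrary: ks k and ks k rule: mty.induct sty.induct)
  case (Forall x1 x2)
  then show ?case by (auto intro: Forall.IH[where ks="x1 # ks", simplified])
qed (auto intro: ilc_iopen)

lemma wf_isub[simp]: fixes r :: "('b,'g) mty" and s :: "('b,'g) sty" shows
  "wf_m (isub_m \<theta> r) = wf_m r" "wf_s (isub_s \<theta> s) = wf_s s"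
  by (induction r and s rule: mty.induct sty.induct) (auto, (case_tac x2; simp)+)

lemma wf_open[simp]: fixes r :: "('b,'g) mty" and s :: "('b,'g) sty" shows
  "wf_m (open_m k as r) = wf_m r" "wf_s (open_s k as s) = wf_s s"
  by (induction r and s arbitrary: k and k rule: mty.induct sty.induct) (auto, (case_tac x2; simp)+)

lemma skel_isub[simp]: fixes r :: "('b,'g) mty" and s :: "('b,'g) sty" shows
  "skel_m (isub_m \<theta> r) = skel_m r" "skel_s (isub_s \<theta> s) = skel_s s"
  by (induction r and s rule: mty.induct sty.induct) auto

lemma skel_open[simp]: fixes r :: "('b,'g) mty" and s :: "('b,'g) sty" shows
  "skel_m (open_m k as r) = skel_m r" "skel_s (open_s k as s) = skel_s s"
  by (induction r and s arbitrary: k and k rule: mty.induct sty.induct) auto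

lemma msz_isub[simp]: fixes r :: "('b,'g) mty" and s :: "('b,'g) sty" shows
  "msz_m (isub_m \<theta> r) = msz_m r" "msz_s (isub_s \<theta> s) = msz_s s"
  by (induction r and s rule: mty.induct sty.induct) auto

lemma msz_open[simp]: fixes r :: "('b,'g) mty" and s :: "('b,'g) sty" shows
  "msz_m (open_m k as r) = msz_m r" "msz_s (open_s k as s) = msz_s s"
  by (induction r and s arbitrary: k and k rule: mty.induct sty.induct) auto

lemma finite_fv: fixes r :: "('b,'g) mty" and s :: "('b,'g) sty" shows
  "finite (fv_m r)" "finite (fv_s s)"
  by (induction r and s rule: mty.induct sty.induct) (auto simp: finite_ifv)

lemma open_shape_Base: "open_m k as r = Base B a \<Longrightarrow> \<exists>b. r = Base B b \<and> a = iopen k as b"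
  by (cases r) auto
lemma open_shape_Arr: "open_m k as r = Arr s1 r1 \<Longrightarrow> \<exists>s0 r0. r = Arr s0 r0"
  by (cases r) auto
lemma isub_shape_Base: "isub_m \<theta> r = Base B a \<Longrightarrow> \<exists>b. r = Base B b \<and> a = isub \<theta> b"
  by (cases r) auto
lemma isub_shape_Arr: "isub_m \<theta> r = Arr s1 r1 \<Longrightarrow> \<exists>s0 r0. r = Arr s0 r0 \<and> s1 = isub_s \<theta> s0 \<and> r1 = isub_m \<theta> r0"
  by (cases r) auto

lemma fresh_exists: "finite S \<Longrightarrow> \<exists>is. fresh_names n S is"
proof -
  assume "finite S"
  define m where "m = Suc (Max (insert 0 S))"
  have "\<forall>x\<in>S. x < m" using \<open>finite S\<close> by (auto simp: m_def le_imp_less_Suc)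
  then show ?thesis
    by (rule_tac x="[m..<m+n]" in exI) (auto simp: fresh_names_def)
qed

definition upd :: "(nat \<Rightarrow> 'g ix) \<Rightarrow> nat list \<Rightarrow> 'g ix list \<Rightarrow> nat \<Rightarrow> 'g ix" where
  "upd \<theta> is as j = (case map_of (zip is as) j of Some a \<Rightarrow> a | None \<Rightarrow> \<theta> j)"

lemma upd_out: "j \<notin> set is \<Longrightarrow> upd \<theta> is as j = \<theta> j"
  by (auto simp: upd_def split: option.split dest!: map_of_SomeD set_zip_leftD)

lemma upd_map: "distinct is \<Longrightarrow> length is = length as \<Longrightarrow> map (upd \<theta> is as) is = as"
  by (auto simp: upd_def map_of_zip_nth intro!: nth_equalityI)

lemma upd_lcs: "lcs \<theta> \<Longrightarrow> \<forall>a\<in>set as. ilc [] a \<Longrightarrow> lcs (upd \<theta> is as)"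
  by (auto simp: lcs_def upd_def split: option.split dest!: map_of_SomeD set_zip_rightD)

lemma upd_range: "upd \<theta> is as j = \<theta> j \<or> upd \<theta> is as j \<in> set as"
  by (auto simp: upd_def split: option.split dest!: map_of_SomeD set_zip_rightD)




lemma isub_comp_IFree[simp]: "isub \<theta> \<circ> IFree = \<theta>"
  by (rule ext) simp

lemma isub_open_upd:
  assumes "lcs \<theta>" "distinct is" "length as = length is" "\<forall>a\<in>set as. ilc [] a"
    "set is \<inter> fv_m t = {}"
  shows "isub_m (upd \<theta> is as) (open_names is t) = open_m 0 as (isub_m \<theta> t)"
proof -
  have l: "lcs (upd \<theta> is as)" using assms upd_lcs by blast
  have "isub_m (upd \<theta> is as) t = isub_m \<theta> t"
    using assms(5) by (intro isub_cong_ms) (metis disjoint_iff upd_out)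
  moreover have "map (isub (upd \<theta> is as)) (map IFree is) = as"
    using upd_map[OF assms(2) assms(3)[symmetric]] by simp
  ultimately show ?thesis using isub_open(1)[OF l, of 0 "map IFree is" t] by simp
qed

lemma inst_isub: "lcs \<theta> \<Longrightarrow> inst s r \<Longrightarrow> inst (isub_s \<theta> s) (isub_m \<theta> r)"
  unfolding inst_def
  apply (cases s)
  apply (auto simp: isub_open ilc_isub lcs_def)
  apply (rule_tac x="map (isub \<theta>) as" in exI)
  apply (auto simp: isub_open lcs_def ilc_isub)
  done

lemma subm_isub0: fixes r1 r2 :: "('b,'g) mty" and s1 s2 :: "('b,'g) sty" shows
  "subm J r1 r2 \<Longrightarrow> (\<forall>\<theta>. lcs \<theta> \<longrightarrow> subm J (isub_m \<theta> r1) (isub_m \<theta> r2))"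
  "subs J s1 s2 \<Longrightarrow> (\<forall>\<theta>. lcs \<theta> \<longrightarrow> subs J (isub_s \<theta> s1) (isub_s \<theta> s2))"
proof (induction rule: subm_subs.inducts)
  case (sub_base a b B)
  then show ?case by (auto intro!: subm_subs.sub_base simp: ix_le_isub)
next
  case (sub_prod r1 r2 r1' r2')
  then show ?case by (auto intro!: subm_subs.sub_prod)
next
  case (sub_arr s2 s1 r1 r2)
  then show ?case by (auto intro!: subm_subs.sub_arr)
next
  case (sub_all n r1 s2 "is" r2)
  show ?case proof (intro allI impI)
  fix \<theta> :: "nat \<Rightarrow> 'g ix" assume lt: "lcs \<theta>"
  obtain is' where fr: "fresh_names n (fv_m (isub_m \<theta> r1) \<union> fv_s (isub_s \<theta> s2)) is'"
    using fresh_exists finite_fv by (metis finite_UnI)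
  define \<theta>' where "\<theta>' = upd \<theta> is (map IFree is')"
  have l: "lcs \<theta>'" unfolding \<theta>'_def by (rule upd_lcs[OF lt]) auto
  have f1: "set is \<inter> fv_m r1 = {}" "set is \<inter> fv_s s2 = {}" "distinct is" "length is = n"
    using sub_all.hyps(1) by (auto simp: fresh_names_def)
  have e1: "isub_m \<theta>' (open_names is r1) = open_names is' (isub_m \<theta> r1)"
    unfolding \<theta>'_def using f1 fr sub_all.prems by (intro isub_open_upd) (auto simp: fresh_names_def lt)
  have e2: "isub_s \<theta>' s2 = isub_s \<theta> s2"
    using f1 unfolding \<theta>'_def by (intro isub_cong_ms) (metis disjoint_iff upd_out)
  have "subm J (open_names is' (isub_m \<theta> r1)) (isub_m \<theta>' r2)"
    using sub_all(4) l e1 by metis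
  moreover have "inst (isub_s \<theta> s2) (isub_m \<theta>' r2)"
    using inst_isub[OF l sub_all.hyps(2)] e2 by simp
  ultimately show "subs J (isub_s \<theta> (Forall n r1)) (isub_s \<theta> s2)" using fr by (auto intro!: subm_subs.sub_all)
  qed
qed

lemma subm_isub: "subm J r1 r2 \<Longrightarrow> lcs \<theta> \<Longrightarrow> subm J (isub_m \<theta> r1) (isub_m \<theta> r2)"
  using subm_isub0 by blast
lemma subs_isub: "subs J s1 s2 \<Longrightarrow> lcs \<theta> \<Longrightarrow> subs J (isub_s \<theta> s1) (isub_s \<theta> s2)"
  using subm_isub0 by blast

lemma subm_mono:
  assumes J: "weakly_monotone_interp J"
  shows "lcs \<theta> \<Longrightarrow> lcs \<theta>' \<Longrightarrow> (\<forall>j\<in>fpv_m r. ix_le J (\<theta> j) (\<theta>' j)) \<Longrightarrow>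
    (\<forall>j\<in>fnv_m r. ix_le J (\<theta>' j) (\<theta> j)) \<Longrightarrow> subm J (isub_m \<theta> r) (isub_m \<theta>' r)"
proof (induction "msz_m r" arbitrary: r \<theta> \<theta>' rule: less_induct)
  case less
  show ?case
  proof (cases r)
    case (Base B a)
    then show ?thesis using less.prems by (auto intro!: subm_subs.sub_base ix_le_isub_mono[OF J])
  next
    case (Prod r1 r2)
    then show ?thesis using less by (auto intro!: subm_subs.sub_prod)
  next
    case (Arr s r0)
    obtain n t where s: "s = Forall n t" by (cases s)
    note IH = less.hyps
    have r0: "subm J (isub_m \<theta> r0) (isub_m \<theta>' r0)"
      using less.prems Arr by (intro IH) auto
    obtain "is" where fr: "fresh_names n (fv_m t \<union> fv_m (isub_m \<theta>' t) \<union> fv_m (isub_m \<theta> t)) is"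
      using fresh_exists finite_fv by (metis finite_UnI)
    define \<theta>1 where "\<theta>1 = upd \<theta>' is (map IFree is)"
    define \<theta>2 where "\<theta>2 = upd \<theta> is (map IFree is)"
    have l1: "lcs \<theta>1" "lcs \<theta>2" unfolding \<theta>1_def \<theta>2_def by (rule upd_lcs; use less.prems in auto)+
    have fi: "distinct is" "length is = n" "set is \<inter> fv_m t = {}" using fr by (auto simp: fresh_names_def)
    have e1: "isub_m \<theta>1 (open_names is t) = open_names is (isub_m \<theta>' t)"
      unfolding \<theta>1_def using fi less.prems by (intro isub_open_upd) auto
    have e2: "isub_m \<theta>2 (open_names is t) = open_names is (isub_m \<theta> t)"
      unfolding \<theta>2_def using fi less.prems by (intro isub_open_upd) auto
    have upd_is: "\<And>\<theta>0 j. j \<in> set is \<Longrightarrow> upd \<theta>0 is (map IFree is) j = IFree j"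
      using fi(1) by (auto simp: upd_def map_of_zip_nth in_set_conv_nth)
    have "subm J (isub_m \<theta>1 (open_names is t)) (isub_m \<theta>2 (open_names is t))"
    proof (rule IH)
      show "msz_m (open_names is t) < msz_m r" using Arr s by simp
      show "\<forall>j\<in>fpv_m (open_names is t). ix_le J (\<theta>1 j) (\<theta>2 j)"
      proof
        fix j assume j: "j \<in> fpv_m (open_names is t)"
        show "ix_le J (\<theta>1 j) (\<theta>2 j)"
        proof (cases "j \<in> set is")
          case True then show ?thesis by (simp add: \<theta>1_def \<theta>2_def upd_is ix_le_refl)
        next
          case False
          then have "j \<in> fpv_m t" using j pnv_open(1)[of 0 "map IFree is" t] by auto
          then show ?thesis using False less.prems Arr s by (simp add: \<theta>1_def \<theta>2_def upd_out)
        qed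
      qed
      show "\<forall>j\<in>fnv_m (open_names is t). ix_le J (\<theta>2 j) (\<theta>1 j)"
      proof
        fix j assume j: "j \<in> fnv_m (open_names is t)"
        show "ix_le J (\<theta>2 j) (\<theta>1 j)"
        proof (cases "j \<in> set is")
          case True then show ?thesis by (simp add: \<theta>1_def \<theta>2_def upd_is ix_le_refl)
        next
          case False
          then have "j \<in> fnv_m t" using j pnv_open(1)[of 0 "map IFree is" t] by auto
          then show ?thesis using False less.prems Arr s by (simp add: \<theta>1_def \<theta>2_def upd_out)
        qed
      qed
    qed (use l1 in auto)
    then have "subm J (open_names is (isub_m \<theta>' t)) (open_names is (isub_m \<theta> t))"
      using e1 e2 by simp
    moreover have "inst (Forall n (isub_m \<theta> t)) (open_names is (isub_m \<theta> t))"
      unfolding inst_def using fi by (auto intro!: exI[of _ "map IFree is"])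
    ultimately have "subs J (isub_s \<theta>' s) (isub_s \<theta> s)"
      using fr s by (auto intro!: subm_subs.sub_all simp: fresh_names_def)
    then show ?thesis using r0 Arr by (auto intro!: subm_subs.sub_arr)
  qed
qed

lemma subm_refl: "weakly_monotone_interp J \<Longrightarrow> subm J r r"
  using subm_mono[of J IFree IFree r] by (simp add: ix_le_refl)




lemma subm_Base_left: "subm J (Base B a) r \<Longrightarrow> \<exists>b. r = Base B b \<and> ix_le J a b"
  by (auto elim: subm.cases)
lemma subm_Base_right: "subm J r (Base B b) \<Longrightarrow> \<exists>a. r = Base B a \<and> ix_le J a b"
  by (auto elim: subm.cases)
lemma subm_Prod_right: "subm J r (mty.Prod b1 b2) \<Longrightarrow> \<exists>a1 a2. r = mty.Prod a1 a2 \<and> subm J a1 b1 \<and> subm J a2 b2"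
  by (auto elim: subm.cases)
lemma subm_Prod_left: "subm J (mty.Prod b1 b2) r \<Longrightarrow> \<exists>a1 a2. r = mty.Prod a1 a2 \<and> subm J b1 a1 \<and> subm J b2 a2"
  by (auto elim: subm.cases)
lemma subm_Arr_right: "subm J r (Arr s2 r2) \<Longrightarrow> \<exists>s1 r1. r = Arr s1 r1 \<and> subs J s2 s1 \<and> subm J r1 r2"
  by (auto elim: subm.cases)
lemma subm_Arr_left: "subm J (Arr s1 r1) r \<Longrightarrow> \<exists>s2 r2. r = Arr s2 r2 \<and> subs J s2 s1 \<and> subm J r1 r2"
  by (auto elim: subm.cases)

lemma subs_inv: "subs J (Forall n r1) s2 \<Longrightarrow>
   \<exists>is r2. fresh_names n (fv_m r1 \<union> fv_s s2) is \<and> inst s2 r2 \<and> subm J (open_names is r1) r2"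
  by (erule subs.cases) auto

lemma inst_Forall: "inst (Forall m t) r \<longleftrightarrow> (\<exists>as. length as = m \<and> (\<forall>a\<in>set as. ilc [] a) \<and> r = open_m 0 as t)"
  by (simp add: inst_def)

lemma trans_aux: fixes J :: "'g \<Rightarrow> nat list \<Rightarrow> nat" shows
  "\<forall>b :: ('b,'g) mty. msz_m b = N \<longrightarrow> (\<forall>a c. subm J a b \<longrightarrow> subm J b c \<longrightarrow> subm J a c) \<and>
      (\<forall>X Z m. subs J X (Forall m b) \<longrightarrow> subs J (Forall m b) Z \<longrightarrow> subs J X Z)"
proof (induction N rule: less_induct)
  case (less N)
  have C1: "subm J a b \<Longrightarrow> subm J b c \<Longrightarrow> subm J a c" if sz: "msz_m b = N" for a b c :: "('b,'g) mty"
  proof (cases b)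
    case (Base B x)
    then show "subm J a b \<Longrightarrow> subm J b c \<Longrightarrow> subm J a c"
      by (auto dest!: subm_Base_left subm_Base_right intro!: subm_subs.sub_base intro: ix_le_trans)
  next
    case (Prod b1 b2)
    have i1: "subm J a b1 \<Longrightarrow> subm J b1 c \<Longrightarrow> subm J a c" for a c
      using less.IH[of "msz_m b1"] sz Prod by auto
    have i2: "subm J a b2 \<Longrightarrow> subm J b2 c \<Longrightarrow> subm J a c" for a c
      using less.IH[of "msz_m b2"] sz Prod by auto
    show "subm J a b \<Longrightarrow> subm J b c \<Longrightarrow> subm J a c"
      using Prod by (auto dest!: subm_Prod_left subm_Prod_right intro!: subm_subs.sub_prod intro: i1 i2)
  next
    case (Arr s2 r2)
    obtain m t2 where s2: "s2 = Forall m t2" by (cases s2)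
    have i1: "subm J a r2 \<Longrightarrow> subm J r2 c \<Longrightarrow> subm J a c" for a c
      using less.IH[of "msz_m r2"] sz Arr by auto
    have i2: "subs J X s2 \<Longrightarrow> subs J s2 Z \<Longrightarrow> subs J X Z" for X Z
      using less.IH[of "msz_m t2"] sz Arr s2 by auto
    show "subm J a b \<Longrightarrow> subm J b c \<Longrightarrow> subm J a c"
      using Arr by (auto dest!: subm_Arr_left subm_Arr_right intro!: subm_subs.sub_arr intro: i1 i2)
  qed
  show ?case
  proof (rule allI, rule impI, rule conjI)
    fix b :: "('b, 'g) mty" assume sz: "msz_m b = N"
    show "\<forall>a c. subm J a b \<longrightarrow> subm J b c \<longrightarrow> subm J a c" using C1 sz by blast
    show "\<forall>X Z m. subs J X (Forall m b) \<longrightarrow> subs J (Forall m b) Z \<longrightarrow> subs J X Z"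
    proof (intro allI impI)
      fix X Z m assume h1: "subs J X (Forall m b)" and h2: "subs J (Forall m b) Z"
      obtain n t1 where X: "X = Forall n t1" by (cases X)
      obtain "is" rb where A: "fresh_names n (fv_m t1 \<union> fv_m b) is" "inst (Forall m b) rb"
        "subm J (open_names is t1) rb" using subs_inv h1 X by fastforce
      obtain as where as: "length as = m" "\<forall>a\<in>set as. ilc [] a" "rb = open_m 0 as b"
        using A(2) inst_Forall by blast
      obtain js r3 where B: "fresh_names m (fv_m b \<union> fv_s Z) js" "inst Z r3" "subm J (open_names js b) r3"
        using subs_inv h2 by blast
      obtain is' where fr: "fresh_names n (fv_m t1 \<union> fv_s Z) is'"
        using fresh_exists finite_fv by (metis finite_UnI)
      define \<theta>3 :: "nat \<Rightarrow> 'g ix" where "\<theta>3 = upd IFree is (map IFree is')"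
      have l3: "lcs \<theta>3" unfolding \<theta>3_def by (rule upd_lcs) auto
      have fis: "distinct is" "length is = n" "set is \<inter> fv_m t1 = {}" "set is \<inter> fv_m b = {}"
        using A(1) by (auto simp: fresh_names_def)
      have e1: "isub_m \<theta>3 (open_names is t1) = open_names is' t1"
        unfolding \<theta>3_def using fis fr by (subst isub_open_upd) (auto simp: fresh_names_def)
      define as'' where "as'' = map (isub \<theta>3) as"
      have e2: "isub_m \<theta>3 rb = open_m 0 as'' b"
      proof -
        have "isub_m \<theta>3 b = b" unfolding \<theta>3_def using fis(4)
          by (subst isub_id_ms(1)[symmetric, of b], intro isub_cong_ms) (metis disjoint_iff upd_out)
        then show ?thesis using as(3) by (simp add: as''_def isub_open(1)[OF l3])
      qed
      have s1: "subm J (open_names is' t1) (open_m 0 as'' b)"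
        using subm_isub[OF A(3) l3] e1 e2 by simp
      have las: "\<forall>a\<in>set as''. ilc [] a" "length as'' = m"
        using as l3 by (auto simp: as''_def ilc_isub lcs_def)
      define \<theta>2 :: "nat \<Rightarrow> 'g ix" where "\<theta>2 = upd IFree js as''"
      have l2: "lcs \<theta>2" unfolding \<theta>2_def by (rule upd_lcs) (use las in auto)
      have fjs: "distinct js" "length js = m" "set js \<inter> fv_m b = {}" "set js \<inter> fv_s Z = {}"
        using B(1) by (auto simp: fresh_names_def)
      have e3: "isub_m \<theta>2 (open_names js b) = open_m 0 as'' b"
        unfolding \<theta>2_def using fjs las by (subst isub_open_upd) auto
      have eZ: "isub_s \<theta>2 Z = Z" unfolding \<theta>2_def using fjs(4)
        by (subst isub_id_ms(2)[symmetric, of Z], intro isub_cong_ms) (metis disjoint_iff upd_out)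
      have s2: "subm J (open_m 0 as'' b) (isub_m \<theta>2 r3)"
        using subm_isub[OF B(3) l2] e3 by simp
      have i3: "inst Z (isub_m \<theta>2 r3)" using inst_isub[OF l2 B(2)] eZ by simp
      have "subm J (open_names is' t1) (isub_m \<theta>2 r3)"
        using C1[of "open_m 0 as'' b"] sz s1 s2 by simp
      then show "subs J X Z" using X fr i3 by (auto intro!: subm_subs.sub_all)
    qed
  qed
qed

lemma subm_trans: "subm J a b \<Longrightarrow> subm J b c \<Longrightarrow> subm J a c"
  using trans_aux by blast

lemma subs_trans: "subs J X Y \<Longrightarrow> subs J Y Z \<Longrightarrow> subs J X Z"
  using trans_aux by (metis sty.exhaust)




lemma gen_Sym: "sized_typ decl J \<Gamma> t r \<Longrightarrow> t = Sym h \<Longrightarrow> weakly_monotone_interp J \<Longrightarrow>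
    \<exists>r0. inst (decl h) r0 \<and> subm J r0 r"
proof (induction rule: sized_typ.induct)
  case (T_Fun f r \<Gamma>)
  then show ?case using subm_refl by blast
next
  case (T_Sub \<Gamma> t r1 r)
  then obtain r0 where "inst (decl h) r0" "subm J r0 r1" by blast
  then show ?case using \<open>subm J r1 r\<close> subm_trans by blast
qed auto

lemma gen_App: "sized_typ decl J \<Gamma> t r \<Longrightarrow> t = App t0 u \<Longrightarrow> weakly_monotone_interp J \<Longrightarrow>
    \<exists>n t1 r' t2 is. sized_typ decl J \<Gamma> t0 (Arr (Forall n t1) r') \<and> sized_typ decl J \<Gamma> u t2
     \<and> fresh_names n (fv_s (Forall n t1) \<union> ctx_fv (\<Gamma> |` tfv u)) is
     \<and> subm J t2 (open_names is t1) \<and> subm J r' r"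
proof (induction rule: sized_typ.induct)
  case (T_App \<Gamma> t n t1 r u' t2 "is")
  then have "subm J r r" using subm_refl by blast
  then show ?case using T_App by blast
next
  case (T_Sub \<Gamma> t r1 r)
  then obtain n t1 r' t2 "is" where A: "sized_typ decl J \<Gamma> t0 (Arr (Forall n t1) r')"
    "sized_typ decl J \<Gamma> u t2" "fresh_names n (fv_s (Forall n t1) \<union> ctx_fv (\<Gamma> |` tfv u)) is"
    "subm J t2 (open_names is t1)" "subm J r' r1" by blast
  have "subm J r' r" using A(5) \<open>subm J r1 r\<close> by (rule subm_trans)
  then show ?case using A by blast
qed auto

lemma apps_snoc: "apps h (qs @ [p]) = App (apps h qs) p"
  by (simp add: apps_def)

lemma apps_Nil[simp]: "apps h [] = h" by (simp add: apps_def)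

lemma apps_Sym_eq: "apps (Sym h) qs = Sym h' \<Longrightarrow> qs = [] \<and> h = h'"
  by (cases qs rule: rev_cases) (auto simp: apps_snoc)

lemma apps_App_eq: "apps (Sym h) qs = App t p \<Longrightarrow> \<exists>qs'. qs = qs' @ [p] \<and> t = apps (Sym h) qs'"
  by (cases qs rule: rev_cases) (auto simp: apps_snoc)

lemma apps_not_other: "apps (Sym h) qs \<noteq> Var x" "apps (Sym h) qs \<noteq> Pair a b" "apps (Sym h) qs \<noteq> Let x y a b"
  by (cases qs rule: rev_cases; simp add: apps_snoc)+

lemma apps_not_var: "\<not> is_var (apps (Sym h) qs)"
  by (cases qs rule: rev_cases; simp add: apps_snoc)

lemma tfv_occs: "tfv t \<subseteq> set (var_occs t)"
  by (induction t) auto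



fun stl :: "'b stype \<Rightarrow> 'b stype" where
  "stl (SArr _ t) = t"
| "stl t = t"

definition sdrop :: "nat \<Rightarrow> 'b stype \<Rightarrow> 'b stype" where
  "sdrop k = stl ^^ k"

lemma sdrop_0[simp]: "sdrop 0 s = s" by (simp add: sdrop_def)
lemma sdrop_Suc: "sdrop (Suc k) s = stl (sdrop k s)" by (simp add: sdrop_def)

lemma sdrop_arity: "sdrop (s_arity s) s = s_result s"
proof (induction s)
  case (SArr s1 s2)
  have "sdrop (Suc k) (SArr s1 s2) = sdrop k s2" for k
    by (induction k) (auto simp: sdrop_Suc)
  then show ?case using SArr by simp
qed auto

section \<open>Spine invariant\<close>

fun spine_ok :: "('b, 'g) mty \<Rightarrow> bool" where
  "spine_ok (Arr (Forall n r0) r) = ((\<forall>B. skel_m r0 = SBase B \<longrightarrow>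
       (\<exists>i. n = 0 \<and> r0 = Base B (IFree i) \<and> i \<notin> fnv_m r)) \<and> spine_ok r)"
| "spine_ok _ = True"

lemma canon_spine: fixes r :: "('b,'g) mty" and s :: "('b,'g) sty" shows "canon_m r \<Longrightarrow> spine_ok r" "canon_s s \<Longrightarrow> True"
  by (induction rule: canon_m_canon_s.inducts) (auto, (case_tac p; simp)+)

lemma spine_rename: "spine_ok r \<Longrightarrow> inj_on \<pi> (fv_m r) \<Longrightarrow> spine_ok (isub_m (IFree \<circ> \<pi>) r)"
proof (induction r rule: spine_ok.induct)
  case (1 n r0 r)
  have inj: "inj_on \<pi> (fv_m r)" using 1(3) by (auto intro: inj_on_subset)
  have "spine_ok (isub_m (IFree \<circ> \<pi>) r)" by (rule 1(1); use 1(2) inj in simp)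
  moreover have "\<exists>i. n = 0 \<and> isub_m (IFree \<circ> \<pi>) r0 = Base B (IFree i) \<and> i \<notin> fnv_m (isub_m (IFree \<circ> \<pi>) r)"
    if sk: "skel_m (isub_m (IFree \<circ> \<pi>) r0) = SBase B" for B
  proof -
    obtain i where i: "n = 0" "r0 = Base B (IFree i)" "i \<notin> fnv_m r" using 1(2) sk by auto
    have "\<pi> i \<notin> \<pi> ` fnv_m r"
    proof
      assume "\<pi> i \<in> \<pi> ` fnv_m r"
      then obtain k where k: "k \<in> fnv_m r" "\<pi> k = \<pi> i" by auto
      have "k \<in> fv_m (Arr (Forall n r0) r)" "i \<in> fv_m (Arr (Forall n r0) r)"
        using k i by (auto simp: fv_m_def)
      then have "k = i" using 1(3) k(2) by (auto dest: inj_onD)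
      then show False using k i by simp
    qed
    then show ?thesis using i by (auto simp: pnv_isub)
  qed
  ultimately show ?case unfolding isub_m.simps isub_s.simps spine_ok.simps skel_isub by blast
qed auto

lemma spine_subst: "spine_ok r \<Longrightarrow> i \<notin> fnv_m r \<Longrightarrow> spine_ok (isub_m (IFree(i := a)) r)"
proof (induction r rule: spine_ok.induct)
  case (1 n r0 r)
  have "spine_ok (isub_m (IFree(i := a)) r)" by (rule 1(1); use 1(2,3) in simp)
  moreover have "\<exists>j. n = 0 \<and> isub_m (IFree(i := a)) r0 = Base B (IFree j) \<and> j \<notin> fnv_m (isub_m (IFree(i := a)) r)"
    if sk: "skel_m (isub_m (IFree(i := a)) r0) = SBase B" for B
  proof -
    obtain j where j: "n = 0" "r0 = Base B (IFree j)" "j \<notin> fnv_m r" using 1(2) sk by auto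
    have "j \<noteq> i" using 1(3) j by auto
    moreover have "fnv_m (isub_m (IFree(i := a)) r) = fnv_m r"
    proof -
      have "i \<notin> fnv_m r" using 1(3) by auto
      then show ?thesis by (auto simp: pnv_isub split: if_splits)
    qed
    ultimately show ?thesis using j by auto
  qed
  ultimately show ?case unfolding isub_m.simps isub_s.simps spine_ok.simps skel_isub by blast
qed auto




lemma ctx_fv_empty[simp]: "ctx_fv Map.empty = {}" by (simp add: ctx_fv_def)
lemma ctx_fv_Some: "\<Gamma> x = Some s \<Longrightarrow> fv_s s \<subseteq> ctx_fv \<Gamma>"
  by (auto simp: ctx_fv_def ran_def)
lemma ctx_fv_upd: "ctx_fv (\<Gamma>(x \<mapsto> s)) \<subseteq> ctx_fv \<Gamma> \<union> fv_s s"
  by (auto simp: ctx_fv_def ran_def split: if_splits)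
lemma ran_add_sub: "ran (m1 ++ m2) \<subseteq> ran m1 \<union> ran m2"
  by (auto simp: ran_def map_add_Some_iff)
lemma ctx_fv_add: "ctx_fv (\<Gamma>1 ++ \<Gamma>2) \<subseteq> ctx_fv \<Gamma>1 \<union> ctx_fv \<Gamma>2"
  using ran_add_sub[of \<Gamma>1 \<Gamma>2] by (auto simp: ctx_fv_def)
lemma ran_upd_sub: "ran (m(x \<mapsto> v)) \<subseteq> insert v (ran m)"
  by (auto simp: ran_def)
lemma restrict_empty_ctx: "ctx_fv ((Map.empty :: ('v, 'b, 'g) ctx) |` A) = {}"
  by (simp add: ctx_fv_def)

lemma fv_open_names: "fv_m (open_names is r) \<subseteq> fv_m r \<union> set is"
  using fv_open[of 0 "map IFree is" r] by auto

lemma skel_base: "skel_m r = SBase B \<Longrightarrow> \<exists>a. r = Base B a"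
  by (cases r) auto

lemma rename_inj:
  assumes "distinct is1" "distinct is0" "length is1 = length is0"
  shows "inj_on (upd IFree is1 (map IFree is0)) (set is1)"
proof (rule inj_onI)
  fix x y assume x: "x \<in> set is1" and y: "y \<in> set is1" and e: "upd IFree is1 (map IFree is0) x = upd IFree is1 (map IFree is0) y"
  obtain a where a: "a < length is1" "x = is1 ! a" using x by (auto simp: in_set_conv_nth)
  obtain b where b: "b < length is1" "y = is1 ! b" using y by (auto simp: in_set_conv_nth)
  have "upd IFree is1 (map IFree is0) x = IFree (is0 ! a)"
    using a assms by (simp add: upd_def map_of_zip_nth)
  moreover have "upd IFree is1 (map IFree is0) y = IFree (is0 ! b)"
    using b assms by (simp add: upd_def map_of_zip_nth)
  ultimately have "is0 ! a = is0 ! b" using e by (metis ix.inject(1))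
  then have "a = b" using a b assms by (simp add: nth_eq_iff_index_eq)
  then show "x = y" using a b by simp
qed

lemma spine_rename2: "spine_ok r \<Longrightarrow> (\<forall>j\<in>fv_m r. \<exists>k. \<theta> j = IFree k) \<Longrightarrow> inj_on \<theta> (fv_m r) \<Longrightarrow> spine_ok (isub_m \<theta> r)"
proof -
  assume a: "spine_ok r" "\<forall>j\<in>fv_m r. \<exists>k. \<theta> j = IFree k" "inj_on \<theta> (fv_m r)"
  obtain \<pi> where \<pi>: "\<forall>j\<in>fv_m r. \<theta> j = IFree (\<pi> j)" using a(2) by metis
  have e: "isub_m \<theta> r = isub_m (IFree \<circ> \<pi>) r" using \<pi> by (intro isub_cong_ms) auto
  have "inj_on \<pi> (fv_m r)" using a(3) \<pi> by (auto simp: inj_on_def)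
  then show ?thesis using spine_rename[OF a(1)] e by simp
qed




lemma main_gen:
  fixes decl :: "('f, 'c) symb \<Rightarrow> ('b, 'g) sty"
    and styp :: "('f, 'c) symb \<Rightarrow> 'b stype"
    and J :: "'g \<Rightarrow> nat list \<Rightarrow> nat"
    and \<sigma> :: "'v \<Rightarrow> ('v, 'f, 'c) trm"
    and t :: "('v, 'f, 'c) trm"
  assumes J_mono: "weakly_monotone_interp J"
    and decl_ok: "\<forall>s. closed_s (decl s) \<and> wf_s (decl s) \<and> canon_s (decl s)
                      \<and> skel_s (decl s) = styp s"
  shows "t = apps (Sym h) qs \<Longrightarrow> \<forall>p\<in>set qs. is_pat styp p \<Longrightarrow> distinct (var_occs t) \<Longrightarrow>
   sized_typ decl J Map.empty (tsubst \<sigma> t) \<rho> \<Longrightarrow> finite S \<Longrightarrow>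
   \<exists>\<Gamma> \<tau> \<theta> N. dom \<Gamma> = tfv t \<and> (\<forall>s\<in>ran \<Gamma>. wf_s s \<and> lc_s [] s) \<and> wf_m \<tau> \<and> lc_m [] \<tau>
     \<and> fp decl \<Gamma> t \<tau> \<and> lcs \<theta> \<and> subm J (isub_m \<theta> \<tau>) \<rho>
     \<and> (\<forall>x\<in>tfv t. \<exists>n \<rho>x is. \<Gamma> x = Some (Forall n \<rho>x) \<and> fresh_names n (fv_s (Forall n \<rho>x)) is
          \<and> set is \<subseteq> N \<and> sized_typ decl J Map.empty (\<sigma> x) (isub_m \<theta> (open_names is \<rho>x)))
     \<and> finite N \<and> N \<inter> S = {} \<and> ctx_fv \<Gamma> \<subseteq> N \<and> fv_m \<tau> \<subseteq> N
     \<and> spine_ok \<tau> \<and> skel_m \<tau> = sdrop (length qs) (styp h)"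
proof (induction t arbitrary: h qs \<rho> S)
  case (Var x)
  then show ?case using apps_not_other by metis
next
  case (Pair t1 t2)
  then show ?case using apps_not_other by metis
next
  case (Let x y t1 t2)
  then show ?case using apps_not_other by metis
next
  case (Sym h')
  have qs: "qs = []" and hh: "h = h'" using apps_Sym_eq Sym.prems(1) by metis+
  obtain r0 where r0: "inst (decl h) r0" "subm J r0 \<rho>"
    using gen_Sym[OF Sym.prems(4)[simplified] _ J_mono] hh by auto
  obtain n body where dh: "decl h = Forall n body" by (cases "decl h")
  obtain as where as: "length as = n" "\<forall>a\<in>set as. ilc [] a" "r0 = open_m 0 as body"
    using r0(1) dh by (auto simp: inst_def)
  have cl: "fv_m body = {}" "lc_m [n] body" "wf_m body" "canon_s (Forall n body)" "skel_m body = styp h"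
    using decl_ok[rule_format, of h] dh by (auto simp: closed_s_def)
  obtain is0 where is0: "fresh_names n S is0" using fresh_exists Sym.prems(5) by blast
  have fi0: "distinct is0" "length is0 = n" "set is0 \<inter> S = {}" using is0 by (auto simp: fresh_names_def)
  define \<tau> where "\<tau> = open_names is0 body"
  define \<theta> :: "nat \<Rightarrow> 'g ix" where "\<theta> = upd IFree is0 as"
  have lt: "lcs \<theta>" unfolding \<theta>_def using as by (intro upd_lcs) auto
  have e: "isub_m \<theta> \<tau> = r0"
    unfolding \<theta>_def \<tau>_def using fi0 as cl by (subst isub_open_upd) auto
  have fp0: "fp decl Map.empty (Sym h) \<tau>"
    unfolding \<tau>_def using dh fi0 cl by (intro fp.Fp_Fun) (auto simp: fresh_names_def)
  have wf: "wf_m \<tau>" using cl by (simp add: \<tau>_def)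
  have lc: "lc_m [] \<tau>" unfolding \<tau>_def using lc_open(1)[of "[]" n body 0 "map IFree is0"] cl fi0 by simp
  have fvt: "fv_m \<tau> \<subseteq> set is0" using fv_open_names[of is0 body] cl by (simp add: \<tau>_def)
  have sp: "spine_ok \<tau>"
  proof -
    obtain is1 where c1: "fresh_names n (fv_s (Forall n body)) is1" "canon_m (open_names is1 body)"
      using cl(4) by (auto elim: canon_s.cases)
    have fi1: "distinct is1" "length is1 = n" using c1 by (auto simp: fresh_names_def)
    have s1: "spine_ok (open_names is1 body)" using canon_spine(1)[OF c1(2)] .
    define \<theta>r :: "nat \<Rightarrow> 'g ix" where "\<theta>r = upd IFree is1 (map IFree is0)"
    have er: "isub_m \<theta>r (open_names is1 body) = \<tau>"
      unfolding \<theta>r_def \<tau>_def using fi0 fi1 cl by (subst isub_open_upd) auto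
    have fv1: "fv_m (open_names is1 body) \<subseteq> set is1" using fv_open_names[of is1 body] cl by simp
    have "\<forall>j\<in>fv_m (open_names is1 body). \<exists>k. \<theta>r j = IFree k"
    proof
      fix j assume "j \<in> fv_m (open_names is1 body)"
      show "\<exists>k. \<theta>r j = IFree k" using upd_range[of IFree is1 "map IFree is0" j] by (auto simp: \<theta>r_def)
    qed
    moreover have "inj_on \<theta>r (fv_m (open_names is1 body))"
      using rename_inj[of is1 is0] fi0 fi1 fv1 unfolding \<theta>r_def by (auto intro: inj_on_subset)
    ultimately show ?thesis using spine_rename2[OF s1] er by metis
  qed
  show ?case
  proof (intro exI conjI)
    show "dom Map.empty = tfv (Sym h')" by simp
    show "fp decl Map.empty (Sym h') \<tau>" using fp0 hh by simp
    show "subm J (isub_m \<theta> \<tau>) \<rho>" using e r0 by simp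
    show "skel_m \<tau> = sdrop (length qs) (styp h)" using cl qs by (simp add: \<tau>_def)
    show "finite (set is0)" by simp
    show "fv_m \<tau> \<subseteq> set is0" by (rule fvt)
  qed (use wf lc lt sp fi0 in auto)
next
  case (App t' p)
  obtain qs' where qs: "qs = qs' @ [p]" and t': "t' = apps (Sym h) qs'"
    using apps_App_eq App.prems(1) by metis
  have pats': "\<forall>q\<in>set qs'. is_pat styp q" and patp: "is_pat styp p" using App.prems(2) qs by auto
  have d1: "distinct (var_occs t')" and d2: "distinct (var_occs p)"
    and dj: "tfv t' \<inter> tfv p = {}"
    using App.prems(3) tfv_occs[of t'] tfv_occs[of p] by auto
  have ty: "sized_typ decl J Map.empty (App (tsubst \<sigma> t') (tsubst \<sigma> p)) \<rho>"
    using App.prems(4) by simp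
  obtain n t1 r' t2 "is" where G: "sized_typ decl J Map.empty (tsubst \<sigma> t') (Arr (Forall n t1) r')"
    "sized_typ decl J Map.empty (tsubst \<sigma> p) t2"
    "fresh_names n (fv_s (Forall n t1) \<union> ctx_fv ((Map.empty :: ('v, 'b, 'g) ctx) |` tfv (tsubst \<sigma> p))) is"
    "subm J t2 (open_names is t1)" "subm J r' \<rho>"
    using gen_App[OF ty refl J_mono] by blast
  have fis: "distinct is" "length is = n" using G(3) by (auto simp: fresh_names_def)
  obtain \<Gamma>1 \<tau>1 \<theta>1 N1 where I1: "dom \<Gamma>1 = tfv t'" "\<forall>s\<in>ran \<Gamma>1. wf_s s \<and> lc_s [] s" "wf_m \<tau>1" "lc_m [] \<tau>1"
     "fp decl \<Gamma>1 t' \<tau>1" "lcs \<theta>1" "subm J (isub_m \<theta>1 \<tau>1) (Arr (Forall n t1) r')"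
     "\<forall>x\<in>tfv t'. \<exists>n \<rho>x is. \<Gamma>1 x = Some (Forall n \<rho>x) \<and> fresh_names n (fv_s (Forall n \<rho>x)) is
          \<and> set is \<subseteq> N1 \<and> sized_typ decl J Map.empty (\<sigma> x) (isub_m \<theta>1 (open_names is \<rho>x))"
     "finite N1" "N1 \<inter> S = {}" "ctx_fv \<Gamma>1 \<subseteq> N1" "fv_m \<tau>1 \<subseteq> N1"
     "spine_ok \<tau>1" "skel_m \<tau>1 = sdrop (length qs') (styp h)"
    using App.IH(1)[OF t' pats' d1 G(1) App.prems(5)] by blast
  obtain s1' r1' where A1: "isub_m \<theta>1 \<tau>1 = Arr s1' r1'" "subs J (Forall n t1) s1'" "subm J r1' r'"
    using subm_Arr_right[OF I1(7)] by blast
  obtain \<sigma>1 r1 where A2: "\<tau>1 = Arr \<sigma>1 r1" "s1' = isub_s \<theta>1 \<sigma>1" "r1' = isub_m \<theta>1 r1"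
    using isub_shape_Arr[OF A1(1)] by blast
  obtain m \<rho>1 where s1: "\<sigma>1 = Forall m \<rho>1" by (cases \<sigma>1)
  obtain js r2 where K: "fresh_names n (fv_m t1 \<union> fv_m (isub_m \<theta>1 \<rho>1)) js"
     "inst (Forall m (isub_m \<theta>1 \<rho>1)) r2" "subm J (open_names js t1) r2"
    using subs_inv[OF A1(2)] A2(2) s1 by auto
  obtain bs where bs: "length bs = m" "\<forall>a\<in>set bs. ilc [] a" "r2 = open_m 0 bs (isub_m \<theta>1 \<rho>1)"
    using K(2) inst_Forall by blast
  define \<theta>r :: "nat \<Rightarrow> 'g ix" where "\<theta>r = upd IFree js (map IFree is)"
  have fjs: "distinct js" "length js = n" "set js \<inter> fv_m t1 = {}" "set js \<inter> fv_m (isub_m \<theta>1 \<rho>1) = {}"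
    using K(1) by (auto simp: fresh_names_def)
  have lr: "lcs \<theta>r" unfolding \<theta>r_def by (rule upd_lcs) auto
  have er1: "isub_m \<theta>r (open_names js t1) = open_names is t1"
    unfolding \<theta>r_def using fjs fis by (subst isub_open_upd) auto
  define bs' where "bs' = map (isub \<theta>r) bs"
  have lbs': "length bs' = m" "\<forall>a\<in>set bs'. ilc [] a" using bs lr by (auto simp: bs'_def ilc_isub lcs_def)
  have er2: "isub_m \<theta>r r2 = open_m 0 bs' (isub_m \<theta>1 \<rho>1)"
  proof -
    have "isub_m \<theta>r (isub_m \<theta>1 \<rho>1) = isub_m \<theta>1 \<rho>1" unfolding \<theta>r_def using fjs(4)
      by (subst isub_id_ms(1)[symmetric, of "isub_m \<theta>1 \<rho>1"], intro isub_cong_ms) (metis disjoint_iff upd_out)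
    then show ?thesis using bs(3) by (simp add: bs'_def isub_open(1)[OF lr])
  qed
  have KEY: "subm J t2 (open_m 0 bs' (isub_m \<theta>1 \<rho>1))"
    using subm_trans[OF G(4)] subm_isub[OF K(3) lr] er1 er2 by simp
  have rr: "subm J (isub_m \<theta>1 r1) \<rho>" using A1(3) A2(3) G(5) subm_trans by blast
  have fvt1: "fv_m \<rho>1 \<subseteq> N1" "fv_m r1 \<subseteq> N1" using I1(12) A2(1) s1 by auto
  have wl1: "wf_s \<sigma>1" "lc_s [] \<sigma>1" "wf_m r1" "lc_m [] r1" using I1(3,4) A2(1) by auto
  have sk1: "skel_m r1 = sdrop (length qs) (styp h)"
  proof -
    have "sdrop (length qs) (styp h) = stl (sdrop (length qs') (styp h))" using qs by (simp add: sdrop_Suc)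
    also have "sdrop (length qs') (styp h) = SArr (skel_m \<rho>1) (skel_m r1)" using I1(14) A2(1) s1 by simp
    finally show ?thesis by simp
  qed
  have spr1: "spine_ok r1" using I1(13) A2(1) s1 by simp
  from patp show ?case
  proof (cases rule: is_pat.cases)
    case (pat_var x)
    have xn: "x \<notin> tfv t'" using dj pat_var by auto
    have tyx: "sized_typ decl J Map.empty (\<sigma> x) (open_m 0 bs' (isub_m \<theta>1 \<rho>1))"
      using G(2) KEY pat_var by (auto intro: sized_typ.T_Sub)
    obtain is'' where fr'': "fresh_names m (fv_m \<rho>1 \<union> N1 \<union> S) is''"
      using fresh_exists App.prems(5) I1(9) finite_fv by (metis finite_UnI)
    have fi'': "distinct is''" "length is'' = m" "set is'' \<inter> fv_m \<rho>1 = {}" "set is'' \<inter> N1 = {}" "set is'' \<inter> S = {}"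
      using fr'' by (auto simp: fresh_names_def)
    define \<theta> where "\<theta> = upd \<theta>1 is'' bs'"
    have lt: "lcs \<theta>" unfolding \<theta>_def using I1(6) lbs' by (intro upd_lcs) auto
    have agree: "\<And>j. j \<in> N1 \<Longrightarrow> \<theta> j = \<theta>1 j" unfolding \<theta>_def using fi''(4) by (auto intro: upd_out)
    have agreeX: "isub_m \<theta> X = isub_m \<theta>1 X" if "fv_m X \<subseteq> N1" for X
      using that agree by (intro isub_cong_ms) auto
    define \<Gamma> where "\<Gamma> = \<Gamma>1(x \<mapsto> \<sigma>1)"
    show ?thesis
    proof (intro exI conjI)
      show "dom \<Gamma> = tfv (App t' p)" using I1(1) pat_var by (auto simp: \<Gamma>_def)
      show "\<forall>s\<in>ran \<Gamma>. wf_s s \<and> lc_s [] s" using I1(2) wl1 ran_upd_sub[of \<Gamma>1 x \<sigma>1] by (auto simp: \<Gamma>_def)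
      show "wf_m r1" "lc_m [] r1" using wl1 by auto
      show "fp decl \<Gamma> (App t' p) r1" unfolding \<Gamma>_def pat_var
        using I1(5) A2(1) xn I1(1) by (auto intro!: fp.Fp_AppVar)
      show "lcs \<theta>" by (rule lt)
      show "subm J (isub_m \<theta> r1) \<rho>" using rr agreeX[OF fvt1(2)] by simp
      show "finite (N1 \<union> set is'')" using I1(9) by simp
      show "(N1 \<union> set is'') \<inter> S = {}" using I1(10) fi''(5) by auto
      show "ctx_fv \<Gamma> \<subseteq> N1 \<union> set is''" using ctx_fv_upd[of \<Gamma>1 x \<sigma>1] I1(11) fvt1 s1 by (auto simp: \<Gamma>_def)
      show "fv_m r1 \<subseteq> N1 \<union> set is''" using fvt1 by auto
      show "spine_ok r1" by (rule spr1)
      show "skel_m r1 = sdrop (length qs) (styp h)" by (rule sk1)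
      show "\<forall>y\<in>tfv (App t' p). \<exists>n \<rho>x is. \<Gamma> y = Some (Forall n \<rho>x) \<and> fresh_names n (fv_s (Forall n \<rho>x)) is
          \<and> set is \<subseteq> N1 \<union> set is'' \<and> sized_typ decl J Map.empty (\<sigma> y) (isub_m \<theta> (open_names is \<rho>x))"
      proof
        fix y assume y: "y \<in> tfv (App t' p)"
        show "\<exists>n \<rho>x is. \<Gamma> y = Some (Forall n \<rho>x) \<and> fresh_names n (fv_s (Forall n \<rho>x)) is
          \<and> set is \<subseteq> N1 \<union> set is'' \<and> sized_typ decl J Map.empty (\<sigma> y) (isub_m \<theta> (open_names is \<rho>x))"
        proof (cases "y = x")
          case True
          have "isub_m \<theta> (open_names is'' \<rho>1) = open_m 0 bs' (isub_m \<theta>1 \<rho>1)"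
            unfolding \<theta>_def using I1(6) fi'' lbs' by (subst isub_open_upd) auto
          then show ?thesis using True tyx fr'' s1 fi''
            by (intro exI[of _ m] exI[of _ \<rho>1] exI[of _ is'']) (auto simp: \<Gamma>_def fresh_names_def)
        next
          case False
          then have yt: "y \<in> tfv t'" using y pat_var by auto
          obtain n' \<rho>y isy where Y: "\<Gamma>1 y = Some (Forall n' \<rho>y)" "fresh_names n' (fv_s (Forall n' \<rho>y)) isy"
            "set isy \<subseteq> N1" "sized_typ decl J Map.empty (\<sigma> y) (isub_m \<theta>1 (open_names isy \<rho>y))"
            using I1(8) yt by blast
          have "fv_m \<rho>y \<subseteq> N1" using ctx_fv_Some[of \<Gamma>1 y, OF Y(1)] I1(11) by auto
          then have "fv_m (open_names isy \<rho>y) \<subseteq> N1" using fv_open_names[of isy \<rho>y] Y(3) by auto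
          then have "isub_m \<theta> (open_names isy \<rho>y) = isub_m \<theta>1 (open_names isy \<rho>y)" by (rule agreeX)
          then show ?thesis using Y False by (intro exI[of _ n'] exI[of _ \<rho>y] exI[of _ isy]) (auto simp: \<Gamma>_def)
        qed
      qed
    qed
  next
    case (pat_con c B ps2)
    define \<rho>p where "\<rho>p = open_m 0 bs' (isub_m \<theta>1 \<rho>1)"
    have typp: "sized_typ decl J Map.empty (tsubst \<sigma> p) \<rho>p"
      using G(2) KEY by (auto intro: sized_typ.T_Sub simp: \<rho>p_def)
    have fS2: "finite (S \<union> N1)" using App.prems(5) I1(9) by simp
    obtain \<Gamma>2 \<tau>2 \<theta>2 N2 where I2: "dom \<Gamma>2 = tfv p" "\<forall>s\<in>ran \<Gamma>2. wf_s s \<and> lc_s [] s" "wf_m \<tau>2" "lc_m [] \<tau>2"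
     "fp decl \<Gamma>2 p \<tau>2" "lcs \<theta>2" "subm J (isub_m \<theta>2 \<tau>2) \<rho>p"
     "\<forall>x\<in>tfv p. \<exists>n \<rho>x is. \<Gamma>2 x = Some (Forall n \<rho>x) \<and> fresh_names n (fv_s (Forall n \<rho>x)) is
          \<and> set is \<subseteq> N2 \<and> sized_typ decl J Map.empty (\<sigma> x) (isub_m \<theta>2 (open_names is \<rho>x))"
     "finite N2" "N2 \<inter> (S \<union> N1) = {}" "ctx_fv \<Gamma>2 \<subseteq> N2" "fv_m \<tau>2 \<subseteq> N2"
     "spine_ok \<tau>2" "skel_m \<tau>2 = sdrop (length ps2) (styp (Cn c))"
      using App.IH(2)[OF pat_con(1) pat_con(4) d2 typp fS2] by blast
    have sk2: "skel_m \<tau>2 = SBase B" using I2(14) unfolding pat_con(3) sdrop_arity pat_con(2) .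
    obtain a where \<tau>2: "\<tau>2 = Base B a" using skel_base[OF sk2] by blast
    have h1: "subm J (Base B (isub \<theta>2 a)) \<rho>p" using I2(7) \<tau>2 by simp
    obtain b0 where b0: "\<rho>p = Base B b0" "ix_le J (isub \<theta>2 a) b0"
      using subm_Base_left[OF h1] by blast
    have h2: "open_m 0 bs' (isub_m \<theta>1 \<rho>1) = Base B b0" using b0(1) unfolding \<rho>p_def .
    obtain b1 where h3: "isub_m \<theta>1 \<rho>1 = Base B b1" "b0 = iopen 0 bs' b1"
      using open_shape_Base[OF h2] by blast
    obtain b2 where "\<rho>1 = Base B b2" "b1 = isub \<theta>1 b2" using isub_shape_Base[OF h3(1)] by blast
    then have "skel_m \<rho>1 = SBase B" by simp
    then obtain i where i: "m = 0" "\<rho>1 = Base B (IFree i)" "i \<notin> fnv_m r1"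
      using I1(13) A2(1) s1 by auto
    have b0i: "b0 = \<theta>1 i" using b0(1) i I1(6) by (auto simp: \<rho>p_def lcs_def iopen_lc)
    have le: "ix_le J (isub \<theta>2 a) (\<theta>1 i)" using b0 b0i by simp
    have la: "ilc [] a" using I2(4) \<tau>2 by simp
    have fva: "ifv a \<subseteq> N2" using I2(12) \<tau>2 by simp
    have dN: "N1 \<inter> N2 = {}" using I2(10) by auto
    define \<theta> where "\<theta> = (\<lambda>j. if j \<in> N1 then \<theta>1 j else \<theta>2 j)"
    define \<tau> where "\<tau> = isub_m (IFree(i := a)) r1"
    define \<Gamma> where "\<Gamma> = \<Gamma>1 ++ \<Gamma>2"
    have lt: "lcs \<theta>" using I1(6) I2(6) by (auto simp: lcs_def \<theta>_def)
    have lsub: "lcs (IFree(i := a))" using la by (auto simp: lcs_def)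
    have ag1: "isub_m \<theta> X = isub_m \<theta>1 X" if "fv_m X \<subseteq> N1" for X
      using that by (intro isub_cong_ms) (auto simp: \<theta>_def)
    have ag2: "isub_m \<theta> X = isub_m \<theta>2 X" if "fv_m X \<subseteq> N2" for X
      using that dN by (intro isub_cong_ms) (auto simp: \<theta>_def)
    have ag2a: "isub \<theta> a = isub \<theta>2 a"
      using fva dN by (intro isub_cong) (auto simp: \<theta>_def)
    define \<theta>1' where "\<theta>1' = \<theta>1(i := isub \<theta>2 a)"
    have e\<tau>: "isub_m \<theta> \<tau> = isub_m \<theta>1' r1"
    proof -
      have "isub_m \<theta> \<tau> = isub_m (isub \<theta> \<circ> IFree(i := a)) r1"
        by (simp add: \<tau>_def isub_comp_ms)
      also have "\<dots> = isub_m \<theta>1' r1"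
        using fvt1(2) ag2a by (intro isub_cong_ms) (auto simp: \<theta>1'_def \<theta>_def)
      finally show ?thesis .
    qed
    have l1': "lcs \<theta>1'" using I1(6) I2(6) la by (auto simp: lcs_def \<theta>1'_def ilc_isub)
    have mono: "subm J (isub_m \<theta>1' r1) (isub_m \<theta>1 r1)"
      using subm_mono[OF J_mono l1' I1(6), of r1] le i(3)
      by (auto simp: \<theta>1'_def ix_le_refl fv_m_def)
    have fvtau: "fv_m \<tau> \<subseteq> N1 \<union> N2"
      using fvt1(2) fva by (auto simp: \<tau>_def fv_isub split: if_splits)
    show ?thesis
    proof (intro exI conjI)
      show "dom \<Gamma> = tfv (App t' p)" using I1(1) I2(1) by (auto simp: \<Gamma>_def)
      show "\<forall>s\<in>ran \<Gamma>. wf_s s \<and> lc_s [] s" using I1(2) I2(2) ran_add_sub[of \<Gamma>1 \<Gamma>2] by (auto simp: \<Gamma>_def)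
      show "wf_m \<tau>" using wl1 by (simp add: \<tau>_def)
      show "lc_m [] \<tau>" unfolding \<tau>_def by (subst lc_isub(1)[OF lsub]) (rule wl1(4))
      show "fp decl \<Gamma> (App t' p) \<tau>" unfolding \<Gamma>_def \<tau>_def
      proof (rule fp.Fp_AppNVar)
        show "fp decl \<Gamma>1 t' (Arr (Mono (Base B (IFree i))) r1)" using I1(5) A2(1) s1 i by simp
        show "fp decl \<Gamma>2 p (Base B a)" using I2(5) \<tau>2 by simp
        show "\<not> is_var p" using pat_con(1) apps_not_var by metis
        show "dom \<Gamma>1 \<inter> dom \<Gamma>2 = {}" using I1(1) I2(1) dj by simp
        show "(ctx_fv \<Gamma>1 \<union> fv_m r1) \<inter> (ctx_fv \<Gamma>2 \<union> ifv a) = {}"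
          using I1(11) fvt1(2) I2(11) fva dN by blast
      qed
      show "lcs \<theta>" by (rule lt)
      show "subm J (isub_m \<theta> \<tau>) \<rho>" using e\<tau> mono rr subm_trans by metis
      show "finite (N1 \<union> N2)" using I1(9) I2(9) by simp
      show "(N1 \<union> N2) \<inter> S = {}" using I1(10) I2(10) by auto
      show "ctx_fv \<Gamma> \<subseteq> N1 \<union> N2" using ctx_fv_add[of \<Gamma>1 \<Gamma>2] I1(11) I2(11) by (auto simp: \<Gamma>_def)
      show "fv_m \<tau> \<subseteq> N1 \<union> N2" by (rule fvtau)
      show "spine_ok \<tau>" unfolding \<tau>_def using spine_subst[OF spr1 i(3)] .
      show "skel_m \<tau> = sdrop (length qs) (styp h)" using sk1 by (simp add: \<tau>_def)
      show "\<forall>y\<in>tfv (App t' p). \<exists>n \<rho>x is. \<Gamma> y = Some (Forall n \<rho>x) \<and> fresh_names n (fv_s (Forall n \<rho>x)) is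
          \<and> set is \<subseteq> N1 \<union> N2 \<and> sized_typ decl J Map.empty (\<sigma> y) (isub_m \<theta> (open_names is \<rho>x))"
      proof
        fix y assume y: "y \<in> tfv (App t' p)"
        show "\<exists>n \<rho>x is. \<Gamma> y = Some (Forall n \<rho>x) \<and> fresh_names n (fv_s (Forall n \<rho>x)) is
          \<and> set is \<subseteq> N1 \<union> N2 \<and> sized_typ decl J Map.empty (\<sigma> y) (isub_m \<theta> (open_names is \<rho>x))"
        proof (cases "y \<in> tfv p")
          case True
          obtain n' \<rho>y isy where Y: "\<Gamma>2 y = Some (Forall n' \<rho>y)" "fresh_names n' (fv_s (Forall n' \<rho>y)) isy"
            "set isy \<subseteq> N2" "sized_typ decl J Map.empty (\<sigma> y) (isub_m \<theta>2 (open_names isy \<rho>y))"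
            using I2(8) True by blast
          have "fv_m \<rho>y \<subseteq> N2" using ctx_fv_Some[of \<Gamma>2 y, OF Y(1)] I2(11) by auto
          then have "fv_m (open_names isy \<rho>y) \<subseteq> N2" using fv_open_names[of isy \<rho>y] Y(3) by auto
          then have "isub_m \<theta> (open_names isy \<rho>y) = isub_m \<theta>2 (open_names isy \<rho>y)" by (rule ag2)
          moreover have "\<Gamma> y = Some (Forall n' \<rho>y)" using Y(1) by (simp add: \<Gamma>_def)
          ultimately show ?thesis using Y by (intro exI[of _ n'] exI[of _ \<rho>y] exI[of _ isy]) auto
        next
          case False
          then have yt: "y \<in> tfv t'" using y by auto
          obtain n' \<rho>y isy where Y: "\<Gamma>1 y = Some (Forall n' \<rho>y)" "fresh_names n' (fv_s (Forall n' \<rho>y)) isy"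
            "set isy \<subseteq> N1" "sized_typ decl J Map.empty (\<sigma> y) (isub_m \<theta>1 (open_names isy \<rho>y))"
            using I1(8) yt by blast
          have "fv_m \<rho>y \<subseteq> N1" using ctx_fv_Some[of \<Gamma>1 y, OF Y(1)] I1(11) by auto
          then have "fv_m (open_names isy \<rho>y) \<subseteq> N1" using fv_open_names[of isy \<rho>y] Y(3) by auto
          then have "isub_m \<theta> (open_names isy \<rho>y) = isub_m \<theta>1 (open_names isy \<rho>y)" by (rule ag1)
          moreover have "\<Gamma> y = Some (Forall n' \<rho>y)" using Y(1) False I2(1)
            by (simp add: \<Gamma>_def map_add_dom_app_simps)
          ultimately show ?thesis using Y by (intro exI[of _ n'] exI[of _ \<rho>y] exI[of _ isy]) auto
        qed
      qed
    qed
  qed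
qed



theorem mainTheorem7:
  fixes decl :: "('f, 'c) symb \<Rightarrow> ('b, 'g) sty"
    and styp :: "('f, 'c) symb \<Rightarrow> 'b stype"
    and J :: "'g \<Rightarrow> nat list \<Rightarrow> nat"
    and f :: 'f
    and ps :: "('v, 'f, 'c) trm list"
    and \<sigma> :: "'v \<Rightarrow> ('v, 'f, 'c) trm"
    and \<rho> :: "('b, 'g) mty"
  assumes J_mono: "weakly_monotone_interp J"
    and decl_ok: "\<forall>s. closed_s (decl s) \<and> wf_s (decl s) \<and> canon_s (decl s)
                      \<and> skel_s (decl s) = styp s"
    and pats: "\<forall>p\<in>set ps. is_pat styp p"
    and lin: "linear (apps (Sym (Fn f)) ps)"
    and rho_ok: "wf_m \<rho>" "lc_m [] \<rho>"
    and typed: "sized_typ decl J Map.empty (tsubst \<sigma> (apps (Sym (Fn f)) ps)) \<rho>"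
  shows "\<exists>\<Gamma> \<tau> \<theta>.
           dom \<Gamma> = tfv (apps (Sym (Fn f)) ps)
         \<and> (\<forall>s\<in>ran \<Gamma>. wf_s s \<and> lc_s [] s) \<and> wf_m \<tau> \<and> lc_m [] \<tau>
         \<and> fp decl \<Gamma> (apps (Sym (Fn f)) ps) \<tau>
         \<and> (\<forall>i. ilc [] (\<theta> i))
         \<and> subm J (isub_m \<theta> \<tau>) \<rho>
         \<and> (\<forall>x\<in>tfv (apps (Sym (Fn f)) ps). \<exists>n \<rho>x is.
               \<Gamma> x = Some (Forall n \<rho>x)
             \<and> fresh_names n (fv_s (Forall n \<rho>x)) is
             \<and> sized_typ decl J Map.empty (\<sigma> x) (isub_m \<theta> (open_names is \<rho>x)))"
proof -
  obtain \<Gamma> \<tau> \<theta> N where R: "dom \<Gamma> = tfv (apps (Sym (Fn f)) ps)"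
     "\<forall>s\<in>ran \<Gamma>. wf_s s \<and> lc_s [] s" "wf_m \<tau>" "lc_m [] \<tau>"
     "fp decl \<Gamma> (apps (Sym (Fn f)) ps) \<tau>" "lcs \<theta>" "subm J (isub_m \<theta> \<tau>) \<rho>"
     "\<forall>x\<in>tfv (apps (Sym (Fn f)) ps). \<exists>n \<rho>x is. \<Gamma> x = Some (Forall n \<rho>x) \<and> fresh_names n (fv_s (Forall n \<rho>x)) is
          \<and> set is \<subseteq> N \<and> sized_typ decl J Map.empty (\<sigma> x) (isub_m \<theta> (open_names is \<rho>x))"
    using main_gen[OF J_mono decl_ok, of "apps (Sym (Fn f)) ps" "Fn f" ps \<sigma> \<rho> "{}"] pats lin typed
    unfolding linear_def by blast
  have R9: "\<forall>x\<in>tfv (apps (Sym (Fn f)) ps). \<exists>n \<rho>x is. \<Gamma> x = Some (Forall n \<rho>x)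
      \<and> fresh_names n (fv_s (Forall n \<rho>x)) is
      \<and> sized_typ decl J Map.empty (\<sigma> x) (isub_m \<theta> (open_names is \<rho>x))"
    using R(8) by blast
  have R10: "\<forall>i. ilc [] (\<theta> i)" using R(6) by (simp add: lcs_def)
  show ?thesis using R(1-5) R(7) R9 R10 by blast
qed

end
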